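(* Let $T$ be an $\mathcal O$-operator on the Lie $\infty$-algebra $(E,M_E)$ with respect to an action $\Phi$ of $E$ on the Lie $\infty$-algebra $(V,M_V)$. Then $M_{V^T}:=\Phi^T+M_V$ is a Lie $\infty$-algebra structure on $V$ (a degree $+1$ coderivation of $\bar S(V)$ with $M_{V^T}^2=0$), and $T:(V,M_{V^T})\to(E,M_E)$ is a Lie $\infty$-morphism.
   Context: Graded vector spaces are $\mathbb Z$-graded, finite dimensional over $\mathbb R$ or $\mathbb C$, with Koszul signs. $\bar S(W)$ is the reduced graded symmetric coalgebra with unshuffle coproduct $\Delta$, Sweedler notation $\Delta(w)=w_{(1)}\otimes w_{(2)}$. A comorphism is a degree $0$ coalgebra morphism; a coderivation of degree $k$ is a degree $k$ map $Q$ with $\Delta Q=(Q\otimes\mathrm{id}+\mathrm{id}\otimes Q)\Delta$. A Lie $\infty$-algebra $(E,M_E)$ is a degree $+1$ coderivation of $\bar S(E)$ with $M_E^2=0$; a Lie $\infty$-morphism is a comorphism $F$ with $F\circ M_E=M_V\circ F$. $\mathrm{Coder}(\bar S(V))[1]$ is the symmetric DGLA with $\partial_{M_V}Q=-M_VQ+(-1)^{\deg Q}QM_V$, $[Q,P]=(-1)^{\deg Q}(QP-(-1)^{\deg Q\deg P}PQ)$. An action of $(E,M_E)$ on $(V,M_V)$ is a degree $+1$ linear map $\bar S(E)\to\mathrm{Coder}(\bar S(V))$, $x\mapsto\Phi_x$, with $\Phi_{M_E(x)}=\partial_{M_V}\Phi_x+\frac12[\Phi_{x_{(1)}},\Phi_{x_{(2)}}]$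 for all $x$ (last term $0$ for $x\in E$). For a degree $0$ map $T:\bar S(V)\to\bar S(E)$, $\Phi^T:\bar S(V)\to\bar S(V)$ is defined by $\Phi^T(v)=0$ for $v\in V$ and $\Phi^T(v)=\Phi_{T(v_{(1)})}v_{(2)}$ for $v\in S^{\ge2}(V)$. An $\mathcal O$-operator on $E$ with respect to $\Phi$ is a comorphism $T:\bar S(V)\to\bar S(E)$ with $M_E\circ T=T\circ(\Phi^T+M_V)$. *)

theory Defs
  imports Main
begin

text \<open>
A finite-dimensional Z-graded vector space W over a field 'k of characteristic 0
(covering R and C) is given by a finite homogeneous basis, i.e. a finite linearly ordered
type 'b together with a degree function d :: 'b => int.  The reduced graded symmetric
coalgebra S(W) (reduced, i.e. without constants) has as basis the monomials
e_l = b_1 b_2 ... b_n, where l = [b_1,...,b_n] is a nonempty sorted list in which no odd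
basis element is repeated.  An element of S(W) is a finitely supported coefficient function
on such lists.  An element of S(W) (x) S(U) is a finitely supported coefficient function on
pairs of lists.
\<close>

definition koz :: "int \<Rightarrow> 'k::field_char_0" where
  "koz n = (if even n then 1 else -1)"

definition ldeg :: "('b \<Rightarrow> int) \<Rightarrow> 'b list \<Rightarrow> int" where
  "ldeg d l = sum_list (map d l)"

definition valid :: "('b::linorder \<Rightarrow> int) \<Rightarrow> 'b list \<Rightarrow> bool" where
  "valid d l \<longleftrightarrow> l \<noteq> [] \<and> sorted l \<and> distinct (filter (\<lambda>x. odd (d x)) l)"

definition SymC :: "('b::{finite,linorder} \<Rightarrow> int) \<Rightarrow> ('b list \<Rightarrow> 'k::field_char_0) set" where
  "SymC d = {f. finite {l. f l \<noteq> 0} \<and> (\<forall>l. f l \<noteq> 0 \<longrightarrow> valid d l)}"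

definition bv :: "'b list \<Rightarrow> 'b list \<Rightarrow> 'k::field_char_0" where
  "bv l = (\<lambda>m. if m = l then 1 else 0)"

definition homog :: "('b \<Rightarrow> int) \<Rightarrow> int \<Rightarrow> ('b list \<Rightarrow> 'k::field_char_0) \<Rightarrow> bool" where
  "homog d n f \<longleftrightarrow> (\<forall>l. f l \<noteq> 0 \<longrightarrow> ldeg d l = n)"

text \<open>Koszul sign of the unshuffle sending w_1...w_n to w_I (x) w_J (J the complement of I).\<close>
definition usgn :: "('b \<Rightarrow> int) \<Rightarrow> 'b list \<Rightarrow> nat set \<Rightarrow> 'k::field_char_0" where
  "usgn d l I = (\<Prod>(i,j)\<in>{(i,j). i < j \<and> j < length l \<and> i \<notin> I \<and> j \<in> I}.
                    koz (d (l!i) * d (l!j)))"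

definition cop :: "('b \<Rightarrow> int) \<Rightarrow> ('b list \<Rightarrow> 'k::field_char_0) \<Rightarrow> ('b list \<times> 'b list \<Rightarrow> 'k)" where
  "cop d f = (\<lambda>(m1,m2). \<Sum>l\<in>{l. f l \<noteq> 0}. f l *
      (\<Sum>I\<in>{I. I \<subseteq> {..<length l} \<and> I \<noteq> {} \<and> I \<noteq> {..<length l}
               \<and> nths l I = m1 \<and> nths l ({..<length l} - I) = m2}. usgn d l I))"

text \<open>Tensor product of linear maps with Koszul sign:
  (P (x) Q)(a (x) b) = (-1)^(q |a|) P a (x) Q b, q the degree of Q.\<close>
definition tmap :: "('a \<Rightarrow> int) \<Rightarrow> int \<Rightarrow> (('a list \<Rightarrow> 'k::field_char_0) \<Rightarrow> ('c list \<Rightarrow> 'k))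
     \<Rightarrow> (('b list \<Rightarrow> 'k) \<Rightarrow> ('e list \<Rightarrow> 'k)) \<Rightarrow> ('a list \<times> 'b list \<Rightarrow> 'k) \<Rightarrow> ('c list \<times> 'e list \<Rightarrow> 'k)" where
  "tmap da q P Q g = (\<lambda>(x,y). \<Sum>(m1,m2)\<in>{p. g p \<noteq> 0}.
       g (m1,m2) * koz (q * ldeg da m1) * P (bv m1) x * Q (bv m2) y)"

text \<open>Linear maps S(A) -> S(B) (only their behaviour on the carrier matters).\<close>
definition linmap :: "('a::{finite,linorder} \<Rightarrow> int) \<Rightarrow> ('b::{finite,linorder} \<Rightarrow> int)
     \<Rightarrow> (('a list \<Rightarrow> 'k::field_char_0) \<Rightarrow> ('b list \<Rightarrow> 'k)) \<Rightarrow> bool" where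
  "linmap da db F \<longleftrightarrow> (\<forall>f\<in>SymC da. F f \<in> SymC db)
     \<and> (\<forall>f\<in>SymC da. \<forall>g\<in>SymC da. F (\<lambda>l. f l + g l) = (\<lambda>l. F f l + F g l))
     \<and> (\<forall>c. \<forall>f\<in>SymC da. F (\<lambda>l. c * f l) = (\<lambda>l. c * F f l))"

definition degmap :: "('a::{finite,linorder} \<Rightarrow> int) \<Rightarrow> ('b::{finite,linorder} \<Rightarrow> int) \<Rightarrow> int
     \<Rightarrow> (('a list \<Rightarrow> 'k::field_char_0) \<Rightarrow> ('b list \<Rightarrow> 'k)) \<Rightarrow> bool" where
  "degmap da db k F \<longleftrightarrow> (\<forall>n. \<forall>f\<in>SymC da. homog da n f \<longrightarrow> homog db (n + k) (F f))"

definition coder :: "('b::{finite,linorder} \<Rightarrow> int) \<Rightarrow> int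
     \<Rightarrow> (('b list \<Rightarrow> 'k::field_char_0) \<Rightarrow> ('b list \<Rightarrow> 'k)) \<Rightarrow> bool" where
  "coder d k Q \<longleftrightarrow> linmap d d Q \<and> degmap d d k Q
     \<and> (\<forall>f\<in>SymC d. cop d (Q f) = (\<lambda>p. tmap d 0 Q id (cop d f) p + tmap d k id Q (cop d f) p))"

definition comorph :: "('a::{finite,linorder} \<Rightarrow> int) \<Rightarrow> ('b::{finite,linorder} \<Rightarrow> int)
     \<Rightarrow> (('a list \<Rightarrow> 'k::field_char_0) \<Rightarrow> ('b list \<Rightarrow> 'k)) \<Rightarrow> bool" where
  "comorph da db F \<longleftrightarrow> linmap da db F \<and> degmap da db 0 F
     \<and> (\<forall>f\<in>SymC da. cop db (F f) = tmap da 0 F F (cop da f))"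

definition lie_inf :: "('b::{finite,linorder} \<Rightarrow> int)
     \<Rightarrow> (('b list \<Rightarrow> 'k::field_char_0) \<Rightarrow> ('b list \<Rightarrow> 'k)) \<Rightarrow> bool" where
  "lie_inf d M \<longleftrightarrow> coder d 1 M \<and> (\<forall>f\<in>SymC d. M (M f) = (\<lambda>l. 0))"

definition lie_morph :: "('a::{finite,linorder} \<Rightarrow> int) \<Rightarrow> ('b::{finite,linorder} \<Rightarrow> int)
     \<Rightarrow> (('a list \<Rightarrow> 'k::field_char_0) \<Rightarrow> ('a list \<Rightarrow> 'k)) \<Rightarrow> (('b list \<Rightarrow> 'k) \<Rightarrow> ('b list \<Rightarrow> 'k))
     \<Rightarrow> (('a list \<Rightarrow> 'k) \<Rightarrow> ('b list \<Rightarrow> 'k)) \<Rightarrow> bool" where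
  "lie_morph da db Ma Mb F \<longleftrightarrow> comorph da db F \<and> (\<forall>f\<in>SymC da. F (Ma f) = Mb (F f))"

text \<open>Differential and bracket of the symmetric DGLA Coder(S(V))[1]; q, p are the degrees
  of Q, P as coderivations.\<close>
definition dDiff :: "(('b list \<Rightarrow> 'k::field_char_0) \<Rightarrow> ('b list \<Rightarrow> 'k)) \<Rightarrow> int
     \<Rightarrow> (('b list \<Rightarrow> 'k) \<Rightarrow> ('b list \<Rightarrow> 'k)) \<Rightarrow> (('b list \<Rightarrow> 'k) \<Rightarrow> ('b list \<Rightarrow> 'k))" where
  "dDiff M q Q = (\<lambda>f l. - M (Q f) l + koz q * Q (M f) l)"

definition brk :: "int \<Rightarrow> int \<Rightarrow> (('b list \<Rightarrow> 'k::field_char_0) \<Rightarrow> ('b list \<Rightarrow> 'k))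
     \<Rightarrow> (('b list \<Rightarrow> 'k) \<Rightarrow> ('b list \<Rightarrow> 'k)) \<Rightarrow> (('b list \<Rightarrow> 'k) \<Rightarrow> ('b list \<Rightarrow> 'k))" where
  "brk q p Q P = (\<lambda>f l. koz q * (Q (P f) l - koz (q * p) * P (Q f) l))"

text \<open>Action of (E, ME) on (V, MV): x |-> Phi x, degree +1 linear map into Coder(S(V)),
  satisfying Phi_{ME x} = d_{MV} Phi_x + 1/2 [Phi_{x(1)}, Phi_{x(2)}] (for homogeneous x,
  hence for all x by linearity); the Sweedler sum is the bilinear extension over Delta x.\<close>
definition action :: "('e::{finite,linorder} \<Rightarrow> int) \<Rightarrow> ('v::{finite,linorder} \<Rightarrow> int)
     \<Rightarrow> (('e list \<Rightarrow> 'k::field_char_0) \<Rightarrow> ('e list \<Rightarrow> 'k)) \<Rightarrow> (('v list \<Rightarrow> 'k) \<Rightarrow> ('v list \<Rightarrow> 'k))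
     \<Rightarrow> (('e list \<Rightarrow> 'k) \<Rightarrow> ('v list \<Rightarrow> 'k) \<Rightarrow> ('v list \<Rightarrow> 'k)) \<Rightarrow> bool" where
  "action dE dV ME MV Phi \<longleftrightarrow>
     (\<forall>x\<in>SymC dE. \<forall>y\<in>SymC dE. \<forall>f\<in>SymC dV.
         Phi (\<lambda>l. x l + y l) f = (\<lambda>l. Phi x f l + Phi y f l))
   \<and> (\<forall>c. \<forall>x\<in>SymC dE. \<forall>f\<in>SymC dV. Phi (\<lambda>l. c * x l) f = (\<lambda>l. c * Phi x f l))
   \<and> (\<forall>n. \<forall>x\<in>SymC dE. homog dE n x \<longrightarrow> coder dV (n + 1) (Phi x))
   \<and> (\<forall>n. \<forall>x\<in>SymC dE. homog dE n x \<longrightarrow> (\<forall>f\<in>SymC dV.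
         Phi (ME x) f = (\<lambda>l. dDiff MV (n + 1) (Phi x) f l
            + (1/2) * (\<Sum>(m1,m2)\<in>{p. cop dE x p \<noteq> 0}. cop dE x (m1,m2) *
                 brk (ldeg dE m1 + 1) (ldeg dE m2 + 1) (Phi (bv m1)) (Phi (bv m2)) f l))))"

text \<open>Phi^T(v) = Phi_{T(v(1))} v(2) (bilinear extension over Delta v); this vanishes on V
  since the reduced coproduct vanishes there.\<close>
definition PhiT :: "('v::{finite,linorder} \<Rightarrow> int)
     \<Rightarrow> (('e list \<Rightarrow> 'k::field_char_0) \<Rightarrow> ('v list \<Rightarrow> 'k) \<Rightarrow> ('v list \<Rightarrow> 'k))
     \<Rightarrow> (('v list \<Rightarrow> 'k) \<Rightarrow> ('e list \<Rightarrow> 'k)) \<Rightarrow> ('v list \<Rightarrow> 'k) \<Rightarrow> ('v list \<Rightarrow> 'k)" where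
  "PhiT dV Phi T = (\<lambda>v l. \<Sum>(m1,m2)\<in>{p. cop dV v p \<noteq> 0}.
       cop dV v (m1,m2) * Phi (T (bv m1)) (bv m2) l)"

definition O_operator :: "('e::{finite,linorder} \<Rightarrow> int) \<Rightarrow> ('v::{finite,linorder} \<Rightarrow> int)
     \<Rightarrow> (('e list \<Rightarrow> 'k::field_char_0) \<Rightarrow> ('e list \<Rightarrow> 'k)) \<Rightarrow> (('v list \<Rightarrow> 'k) \<Rightarrow> ('v list \<Rightarrow> 'k))
     \<Rightarrow> (('e list \<Rightarrow> 'k) \<Rightarrow> ('v list \<Rightarrow> 'k) \<Rightarrow> ('v list \<Rightarrow> 'k))
     \<Rightarrow> (('v list \<Rightarrow> 'k) \<Rightarrow> ('e list \<Rightarrow> 'k)) \<Rightarrow> bool" where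
  "O_operator dE dV ME MV Phi T \<longleftrightarrow> comorph dV dE T
     \<and> (\<forall>f\<in>SymC dV. ME (T f) = T (\<lambda>l. PhiT dV Phi T f l + MV f l))"

end

theory Submission
  imports Defs
begin


lemma koz_add: "koz (a + b) = (koz a * koz b :: 'k::field_char_0)"
  by (auto simp: koz_def)
lemma koz_0[simp]: "koz 0 = 1" by (simp add: koz_def)
lemma koz_sq: "koz a * koz a = (1::'k::field_char_0)" by (simp add: koz_def)
lemma koz_even: "even a \<Longrightarrow> koz a = 1" by (simp add: koz_def)
lemma koz_cong: "even (a - b) \<Longrightarrow> koz a = koz b"
  by (auto simp: koz_def)

lemma koz_sum: "finite A \<Longrightarrow> (\<Prod>x\<in>A. koz (f x)) = (koz (\<Sum>x\<in>A. f x) :: 'k::field_char_0)"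
  by (induction A rule: finite_induct) (auto simp: koz_add)

lemma ldeg_Nil[simp]: "ldeg d [] = 0" by (simp add: ldeg_def)
lemma ldeg_Cons[simp]: "ldeg d (a#l) = d a + ldeg d l" by (simp add: ldeg_def)
lemma ldeg_append[simp]: "ldeg d (l @ m) = ldeg d l + ldeg d m" by (simp add: ldeg_def)

lemma ldeg_nths: "I \<subseteq> {..<length l} \<Longrightarrow> ldeg d (nths l I) = (\<Sum>j\<in>I. d (l!j))"
proof (induction l arbitrary: I)
  case Nil thus ?case by simp
next
  case (Cons a l)
  let ?I = "{j. Suc j \<in> I}"
  have sub: "?I \<subseteq> {..<length l}" using Cons.prems by auto
  have eq: "I = (if 0 \<in> I then {0} else {}) \<union> Suc ` ?I"
    apply (auto simp: image_iff)
    by (metis not0_implies_Suc)+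
  have fin: "finite ?I" using sub finite_subset by blast
  have "(\<Sum>j\<in>I. d ((a#l)!j)) = (if 0 \<in> I then d a else 0) + (\<Sum>j\<in>Suc ` ?I. d ((a#l)!j))"
    apply (subst eq) apply (subst sum.union_disjoint) using fin by auto
  also have "(\<Sum>j\<in>Suc ` ?I. d ((a#l)!j)) = (\<Sum>j\<in>?I. d (l!j))"
    by (subst sum.reindex) auto
  finally show ?case using Cons.IH[OF sub] by (simp add: nths_Cons)
qed

definition Ps :: "'b list \<Rightarrow> nat set \<Rightarrow> (nat \<times> nat) set" where
  "Ps l I = {(i,j). i < j \<and> j < length l \<and> i \<notin> I \<and> j \<in> I}"

lemma usgn_Ps: "usgn d l I = (\<Prod>(i,j)\<in>Ps l I. koz (d (l!i) * d (l!j)))"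
  by (simp add: usgn_def Ps_def)

lemma finite_Ps: "finite (Ps l I)"
  by (rule finite_subset[of _ "{..<length l} \<times> {..<length l}"]) (auto simp: Ps_def)

lemma Suc_img_mem[simp]: "{j. Suc j \<in> Suc ` I} = I" by auto
lemma Suc_img_mem0[simp]: "{j. Suc j \<in> insert 0 (Suc ` I)} = I" by auto

lemma usgn_Cons_in: "usgn d (a#l) (insert 0 (Suc ` I)) = usgn d l I"
proof -
  have "Ps (a#l) (insert 0 (Suc ` I)) = map_prod Suc Suc ` Ps l I"
    apply (auto simp: Ps_def image_iff)
    subgoal for i j by (cases i; cases j) auto
    done
  moreover have "inj_on (map_prod Suc Suc) (Ps l I)" by (auto simp: inj_on_def)
  ultimately show ?thesis
    by (simp add: usgn_Ps prod.reindex case_prod_beta)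
qed

lemma usgn_Cons_out: assumes "I \<subseteq> {..<length l}"
  shows "(usgn d (a#l) (Suc ` I) :: 'k::field_char_0) = koz (d a * ldeg d (nths l I)) * usgn d l I"
proof -
  have e: "Ps (a#l) (Suc ` I) = (\<lambda>j. (0, Suc j)) ` I \<union> map_prod Suc Suc ` Ps l I"
    using assms apply (auto simp: Ps_def image_iff)
    subgoal for i j by (cases i) auto
    done
  have fI: "finite I" using assms finite_subset by blast
  have "usgn d (a#l) (Suc ` I) = (\<Prod>(i,j)\<in>(\<lambda>j. (0, Suc j)) ` I. koz (d ((a#l)!i) * d ((a#l)!j)))
       * (\<Prod>(i,j)\<in>map_prod Suc Suc ` Ps l I. koz (d ((a#l)!i) * d ((a#l)!j)))"
    unfolding usgn_Ps e
    by (rule prod.union_disjoint) (auto simp: fI finite_Ps[unfolded Ps_def] Ps_def)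
  also have "(\<Prod>(i,j)\<in>(\<lambda>j. (0, Suc j)) ` I. koz (d ((a#l)!i) * d ((a#l)!j)) :: 'k)
       = (\<Prod>j\<in>I. koz (d a * d (l!j)))"
    by (subst prod.reindex) (auto simp: inj_on_def)
  also have "\<dots> = koz (d a * ldeg d (nths l I))"
    using fI by (simp add: koz_sum ldeg_nths[OF assms] sum_distrib_left)
  also have "(\<Prod>(i,j)\<in>map_prod Suc Suc ` Ps l I. koz (d ((a#l)!i) * d ((a#l)!j)))
       = usgn d l I"
    unfolding usgn_Ps by (subst prod.reindex) (auto simp: inj_on_def case_prod_beta)
  finally show ?thesis .
qed

lemma sum_Pow_Suc:
  "(\<Sum>J\<in>Pow {..<Suc n}. F J) = (\<Sum>I\<in>Pow {..<n}. F (insert 0 (Suc ` I))) + (\<Sum>I\<in>Pow {..<n}. F (Suc ` I))"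
proof -
  have e: "Pow {..<Suc n} = (\<lambda>I. insert 0 (Suc ` I)) ` Pow {..<n} \<union> (image Suc) ` Pow {..<n}"
  proof (rule set_eqI, rule iffI)
    fix J assume J: "J \<in> Pow {..<Suc n}"
    let ?I = "{j. Suc j \<in> J}"
    have s: "?I \<in> Pow {..<n}" using J by auto
    have "J = (if 0 \<in> J then insert 0 (Suc ` ?I) else Suc ` ?I)"
      apply (rule set_eqI) subgoal for x by (cases x) (auto simp: image_iff) done
    with s show "J \<in> (\<lambda>I. insert 0 (Suc ` I)) ` Pow {..<n} \<union> (image Suc) ` Pow {..<n}"
      by (cases "0 \<in> J") auto
  next
    fix J assume "J \<in> (\<lambda>I. insert 0 (Suc ` I)) ` Pow {..<n} \<union> (image Suc) ` Pow {..<n}"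
    thus "J \<in> Pow {..<Suc n}" by auto
  qed
  have i1: "inj_on (\<lambda>I. insert 0 (Suc ` I)) (Pow {..<n})"
    by (rule inj_onI) (metis Suc_img_mem0)
  have i2: "inj_on (image Suc) (Pow {..<n})"
    by (rule inj_onI) (metis Suc_img_mem)
  have d: "(\<lambda>I. insert 0 (Suc ` I)) ` Pow {..<n} \<inter> (image Suc) ` Pow {..<n} = {}" by auto
  show ?thesis unfolding e
    by (simp add: sum.union_disjoint d sum.reindex i1 i2)
qed

fun Fs :: "('b \<Rightarrow> int) \<Rightarrow> 'b list \<Rightarrow> ('b list \<Rightarrow> 'b list \<Rightarrow> 'k::field_char_0) \<Rightarrow> 'k" where
  "Fs d [] G = G [] []"
| "Fs d (a#l) G = Fs d l (\<lambda>x y. G (a#x) y) + Fs d l (\<lambda>x y. koz (d a * ldeg d x) * G x (a#y))"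

lemma compl_in: "{..<Suc n} - insert 0 (Suc ` I) = Suc ` ({..<n} - I)"
  apply (rule set_eqI) subgoal for x by (cases x) auto done
lemma compl_out: "{..<Suc n} - Suc ` I = insert 0 (Suc ` ({..<n} - I))"
  apply (rule set_eqI) subgoal for x by (cases x) auto done

lemma Fs_idx: "Fs d l G = (\<Sum>I\<in>Pow {..<length l}. usgn d l I * G (nths l I) (nths l ({..<length l} - I)))"
proof (induction l arbitrary: G)
  case Nil thus ?case by (simp add: usgn_def)
next
  case (Cons a l)
  show ?case
    apply (simp only: Fs.simps Cons.IH length_Cons sum_Pow_Suc compl_in compl_out)
    apply (rule arg_cong2[where f="(+)"])
    apply (rule sum.cong, simp)
     apply (simp add: usgn_Cons_in nths_Cons)
    apply (rule sum.cong, simp)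
    apply (simp add: usgn_Cons_out nths_Cons)
    done
qed



lemma Fs_add: "Fs d l (\<lambda>x y. G x y + H x y) = Fs d l G + Fs d l H"
  by (simp add: Fs_idx sum.distrib distrib_left)
lemma Fs_cmult: "Fs d l (\<lambda>x y. c * G x y) = c * Fs d l G"
  by (simp add: Fs_idx sum_distrib_left mult_ac)
lemma Fs_sum: "Fs d l (\<lambda>x y. \<Sum>a\<in>A. G a x y) = (\<Sum>a\<in>A. Fs d l (G a))"
  by (simp add: Fs_idx sum_distrib_left sum.swap[of _ A])
lemma Fs_zero: "Fs d l (\<lambda>x y. 0) = 0"
  by (simp add: Fs_idx)

lemma Fs_cong_ldeg:
  "(\<And>x y. ldeg d x + ldeg d y = ldeg d l \<Longrightarrow> G x y = G' x y) \<Longrightarrow> Fs d l G = Fs d l G'"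
proof (induction l arbitrary: G G')
  case Nil thus ?case by simp
next
  case (Cons a l)
  have 1: "Fs d l (\<lambda>x y. G (a#x) y) = Fs d l (\<lambda>x y. G' (a#x) y)"
    by (rule Cons.IH) (rule Cons.prems, simp)
  have 2: "Fs d l (\<lambda>x y. koz (d a * ldeg d x) * G x (a#y)) = Fs d l (\<lambda>x y. koz (d a * ldeg d x) * G' x (a#y))"
    by (rule Cons.IH) (simp add: Cons.prems)
  show ?case using 1 2 by simp
qed

lemma Fs_coassoc:
  "Fs d l (\<lambda>x y. Fs d x (\<lambda>u v. H u v y)) = Fs d l (\<lambda>x y. Fs d y (\<lambda>u w. H x u w))"
proof (induction l arbitrary: H)
  case Nil thus ?case by simp
next
  case (Cons a l)
  have C: "Fs d l (\<lambda>x y. koz (d a * ldeg d x) * Fs d x (\<lambda>u v. H u v (a#y)))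
        = Fs d l (\<lambda>x y. Fs d x (\<lambda>u v. koz (d a * (ldeg d u + ldeg d v)) * H u v (a#y)))"
    apply (rule arg_cong[where f="Fs d l"], rule ext, rule ext)
    apply (subst Fs_cmult[symmetric])
    apply (rule Fs_cong_ldeg) by simp
  have L: "Fs d (a#l) (\<lambda>x y. Fs d x (\<lambda>u v. H u v y)) =
      Fs d l (\<lambda>x y. Fs d x (\<lambda>u v. H (a#u) v y))
    + Fs d l (\<lambda>x y. Fs d x (\<lambda>u v. koz (d a * ldeg d u) * H u (a#v) y))
    + Fs d l (\<lambda>x y. Fs d x (\<lambda>u v. koz (d a * (ldeg d u + ldeg d v)) * H u v (a#y)))"
    by (simp add: Fs_add C)
  have R: "Fs d (a#l) (\<lambda>x y. Fs d y (\<lambda>u w. H x u w)) =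
      Fs d l (\<lambda>x y. Fs d y (\<lambda>u w. H (a#x) u w))
    + Fs d l (\<lambda>x y. Fs d y (\<lambda>u w. koz (d a * ldeg d x) * H x (a#u) w))
    + Fs d l (\<lambda>x y. Fs d y (\<lambda>u w. koz (d a * (ldeg d x + ldeg d u)) * H x u (a#w)))"
    by (simp add: Fs_add Fs_cmult[symmetric] koz_add distrib_left mult_ac)
  show ?case unfolding L R
    using Cons.IH[of "\<lambda>u v y. H (a#u) v y"]
      Cons.IH[of "\<lambda>u v y. koz (d a * ldeg d u) * H u (a#v) y"]
      Cons.IH[of "\<lambda>u v y. koz (d a * (ldeg d u + ldeg d v)) * H u v (a#y)"]
    by simp
qed

lemma Fs_cocomm:
  "Fs d l G = Fs d l (\<lambda>x y. koz (ldeg d x * ldeg d y) * G y x)"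
proof (induction l arbitrary: G)
  case Nil thus ?case by simp
next
  case (Cons a l)
  have k1: "\<And>x y. koz (d a * ldeg d x) * koz (ldeg d x * ldeg d (a#y)) = (koz (ldeg d x * ldeg d y) :: 'a)"
    by (simp only: koz_add[symmetric], rule koz_cong, simp add: algebra_simps)
  have k2: "\<And>x y. koz (ldeg d x * ldeg d y) * koz (d a * ldeg d y) = (koz (ldeg d (a#x) * ldeg d y) :: 'a)"
    by (simp only: koz_add[symmetric], rule koz_cong, simp add: algebra_simps)
  have e1: "Fs d l (\<lambda>x y. G (a#x) y) = Fs d l (\<lambda>x y. koz (d a * ldeg d x) * (koz (ldeg d x * ldeg d (a#y)) * G (a#y) x))"
    apply (subst Cons.IH) apply (rule arg_cong[where f="Fs d l"]) by (simp only: fun_eq_iff mult.assoc[symmetric] k1, simp)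
  have e2: "Fs d l (\<lambda>x y. koz (d a * ldeg d x) * G x (a#y)) = Fs d l (\<lambda>x y. koz (ldeg d (a#x) * ldeg d y) * G y (a#x))"
    apply (subst Cons.IH) apply (rule arg_cong[where f="Fs d l"]) by (simp only: fun_eq_iff mult.assoc[symmetric] k2, simp)
  show ?case
    by (simp only: Fs.simps e1 e2 add.commute)
qed

definition R :: "('b \<Rightarrow> int) \<Rightarrow> 'b list \<Rightarrow> ('b list \<Rightarrow> 'b list \<Rightarrow> 'k::field_char_0) \<Rightarrow> 'k" where
  "R d l G = Fs d l (\<lambda>x y. if x = [] \<or> y = [] then 0 else G x y)"

lemma R_add: "R d l (\<lambda>x y. G x y + H x y) = R d l G + R d l H"
  unfolding R_def by (subst Fs_add[symmetric]) (rule arg_cong[where f="Fs d l"], auto simp: fun_eq_iff)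
lemma R_cmult: "R d l (\<lambda>x y. c * G x y) = c * R d l G"
  unfolding R_def by (subst Fs_cmult[symmetric]) (rule arg_cong[where f="Fs d l"], auto simp: fun_eq_iff)
lemma R_sum: "R d l (\<lambda>x y. \<Sum>a\<in>A. G a x y) = (\<Sum>a\<in>A. R d l (G a))"
  unfolding R_def by (subst Fs_sum[symmetric]) (rule arg_cong[where f="Fs d l"], auto simp: fun_eq_iff)
lemma R_zero: "R d l (\<lambda>x y. 0) = 0"
  unfolding R_def by (simp add: Fs_zero cong: if_cong)
lemma R_neg: "R d l (\<lambda>x y. - G x y) = - R d l G"
  using R_cmult[of d l "-1" G] by simp
lemma R_diff: "R d l (\<lambda>x y. G x y - H x y) = R d l G - R d l H"
  using R_add[of d l G "\<lambda>x y. - H x y"] R_neg[of d l H] by simp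

lemma R_cocomm: "R d l G = R d l (\<lambda>x y. koz (ldeg d x * ldeg d y) * G y x)"
  unfolding R_def by (subst Fs_cocomm) (rule arg_cong[where f="Fs d l"], auto simp: fun_eq_iff)

lemma R_cong_ldeg:
  "(\<And>x y. ldeg d x + ldeg d y = ldeg d l \<Longrightarrow> G x y = G' x y) \<Longrightarrow> R d l G = R d l G'"
  unfolding R_def by (rule Fs_cong_ldeg) auto

lemma Fs_Nil_eq: "Fs d [] G = G [] []" by simp

lemma R_coassoc:
  "R d l (\<lambda>x y. R d x (\<lambda>u v. H u v y)) = R d l (\<lambda>x y. R d y (\<lambda>u w. H x u w))"
proof -
  let ?H = "\<lambda>u v y. if u = [] \<or> v = [] \<or> y = [] then 0 else H u v y"
  have "R d l (\<lambda>x y. R d x (\<lambda>u v. H u v y)) = Fs d l (\<lambda>x y. Fs d x (\<lambda>u v. ?H u v y))"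
    unfolding R_def
    apply (rule arg_cong[where f="Fs d l"], rule ext, rule ext)
    subgoal for x y by (cases "x = []") (auto intro!: arg_cong[where f="Fs d x"] simp: Fs_zero)
    done
  also have "\<dots> = Fs d l (\<lambda>x y. Fs d y (\<lambda>u w. ?H x u w))" by (rule Fs_coassoc)
  also have "\<dots> = R d l (\<lambda>x y. R d y (\<lambda>u w. H x u w))"
    unfolding R_def
    apply (rule arg_cong[where f="Fs d l"], rule ext, rule ext)
    subgoal for x y by (cases "y = []") (auto intro!: arg_cong[where f="Fs d y"] simp: Fs_zero)
    done
  finally show ?thesis .
qed



definition Cs :: "'b list \<Rightarrow> nat set set" where
  "Cs l = {I. I \<subseteq> {..<length l} \<and> I \<noteq> {} \<and> I \<noteq> {..<length l}}"

lemma nths_eq_Nil: "I \<subseteq> {..<length l} \<Longrightarrow> nths l I = [] \<longleftrightarrow> I = {}"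
proof -
  assume a: "I \<subseteq> {..<length l}"
  have "{i. i < length l \<and> i \<in> I} = I" using a by auto
  moreover have "finite I" using a finite_subset by blast
  ultimately show ?thesis using length_nths[of l I] by (metis card_0_eq length_0_conv)
qed

lemma R_idx: "R d l G = (\<Sum>I\<in>Cs l. usgn d l I * G (nths l I) (nths l ({..<length l} - I)))"
proof -
  have "R d l G = (\<Sum>I\<in>Pow {..<length l}. usgn d l I *
     (if I \<in> Cs l then G (nths l I) (nths l ({..<length l} - I)) else 0))"
    unfolding R_def Fs_idx
    apply (rule sum.cong, simp)
    by (simp add: Cs_def nths_eq_Nil Diff_subset)
  also have "\<dots> = (\<Sum>I\<in>Pow {..<length l}. if I \<in> Cs l then usgn d l I * G (nths l I) (nths l ({..<length l} - I)) else 0)"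
    by (rule sum.cong) auto
  also have "\<dots> = (\<Sum>I\<in>Cs l. usgn d l I * G (nths l I) (nths l ({..<length l} - I)))"
    by (subst sum.If_cases) (auto simp: Cs_def intro!: arg_cong2[where f="sum"])
  finally show ?thesis .
qed

lemma distinct_filter_nths: "distinct (filter P l) \<Longrightarrow> distinct (filter P (nths l I))"
proof (induction l arbitrary: I)
  case Nil thus ?case by simp
next
  case (Cons a l)
  have "a \<notin> set (filter P (nths l {j. Suc j \<in> I}))" if "P a"
    using Cons.prems that set_nths_subset[of l "{j. Suc j \<in> I}"] by auto
  moreover have "distinct (filter P (nths l {j. Suc j \<in> I}))"
    using Cons.IH Cons.prems by (auto split: if_splits)
  ultimately show ?case by (auto simp: nths_Cons)
qed

lemma nths_valid: "valid d l \<Longrightarrow> I \<subseteq> {..<length l} \<Longrightarrow> I \<noteq> {} \<Longrightarrow> valid d (nths l I)"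
  unfolding valid_def by (simp add: nths_eq_Nil sorted_nths distinct_filter_nths)

lemma ldeg_split: "I \<subseteq> {..<length l} \<Longrightarrow> ldeg d (nths l I) + ldeg d (nths l ({..<length l} - I)) = ldeg d l"
proof -
  assume a: "I \<subseteq> {..<length l}"
  have "ldeg d l = ldeg d (nths l {..<length l})" by simp
  also have "\<dots> = (\<Sum>j\<in>{..<length l}. d (l!j))" by (rule ldeg_nths) simp
  also have "\<dots> = (\<Sum>j\<in>I. d (l!j)) + (\<Sum>j\<in>{..<length l} - I. d (l!j))"
    using a by (metis add.commute finite_lessThan sum.subset_diff)
  finally show ?thesis using ldeg_nths[OF a] ldeg_nths[of "{..<length l} - I" l d] by auto
qed

lemma R_cong_valid:
  assumes "valid d l"
    and "\<And>x y. valid d x \<Longrightarrow> valid d y \<Longrightarrow> ldeg d x + ldeg d y = ldeg d l \<Longrightarrow> G x y = G' x y"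
  shows "R d l G = R d l G'"
  unfolding R_idx
proof (rule sum.cong[OF refl])
  fix I assume I: "I \<in> Cs l"
  hence s: "I \<subseteq> {..<length l}" "I \<noteq> {}" "{..<length l} - I \<noteq> {}" by (auto simp: Cs_def)
  show "usgn d l I * G (nths l I) (nths l ({..<length l} - I)) = usgn d l I * G' (nths l I) (nths l ({..<length l} - I))"
    using assms(2)[OF nths_valid[OF assms(1) s(1,2)] nths_valid[OF assms(1) _ s(3)] ldeg_split[OF s(1)]]
    by simp
qed

lemma sum_filter_ind: "finite {x. A x} \<Longrightarrow> sum g {x. A x \<and> B x} = (\<Sum>x | A x. g x * (if B x then 1 else (0::'k::field_char_0)))"
proof -
  assume f: "finite {x. A x}"
  have "{x. A x \<and> B x} = {x \<in> {x. A x}. B x}" by auto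
  hence "sum g {x. A x \<and> B x} = (\<Sum>x | A x. if B x then g x else 0)"
    using sum.inter_filter[OF f, of g B] by simp
  thus ?thesis by (simp add: if_distrib cong: if_cong)
qed

lemma cop_eval: "cop d f (m1,m2) = (\<Sum>l\<in>{l. f l \<noteq> 0}. f l * R d l (\<lambda>x y. if x = m1 \<and> y = m2 then 1 else 0))"
  unfolding cop_def R_idx
  apply simp
  apply (rule sum.cong[OF refl])
  apply (rule arg_cong[where f="\<lambda>x. _ * x"])
  apply (simp only: Cs_def mem_Collect_eq)
  apply (rule sum_filter_ind[where A="\<lambda>I. I \<subseteq> {..<length _} \<and> I \<noteq> {} \<and> I \<noteq> {..<length _}", simplified conj_assoc])
  by (rule finite_subset[of _ "Pow {..<length _}"]) auto

lemma supp_sum: "finite L \<Longrightarrow> {l. f l \<noteq> 0} \<subseteq> L \<Longrightarrow>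
   (\<Sum>l\<in>{l. f l \<noteq> 0}. f l * X l) = (\<Sum>l\<in>L. f l * (X l :: 'k::field_char_0))"
  by (rule sum.mono_neutral_left) auto

lemma cop_sum:
  fixes f :: "'b::{finite,linorder} list \<Rightarrow> 'k::field_char_0"
  assumes fin: "finite {l. f l \<noteq> 0}"
  shows "(\<Sum>(m1,m2)\<in>{p. cop d f p \<noteq> 0}. cop d f (m1,m2) * h m1 m2)
       = (\<Sum>l\<in>{l. f l \<noteq> 0}. f l * R d l h)"
proof -
  let ?L = "{l. f l \<noteq> 0}"
  define S where "S = (\<lambda>(l,I). (nths l I, nths l ({..<length l} - I))) ` (Sigma ?L (\<lambda>l. Pow {..<length l}))"
  have finS: "finite S" unfolding S_def using fin by auto
  have memS: "\<And>l I. l \<in> ?L \<Longrightarrow> I \<in> Cs l \<Longrightarrow> (nths l I, nths l ({..<length l} - I)) \<in> S"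
    unfolding S_def Cs_def by force
  have sub: "{p. cop d f p \<noteq> 0} \<subseteq> S"
  proof
    fix p assume "p \<in> {p. cop d f p \<noteq> 0}"
    then obtain m1 m2 where p: "p = (m1,m2)" "cop d f (m1,m2) \<noteq> 0" by (cases p) auto
    from p(2) obtain l where l: "l \<in> ?L" "f l * R d l (\<lambda>x y. if x = m1 \<and> y = m2 then 1 else (0::'k)) \<noteq> 0"
      unfolding cop_eval by (rule sum.not_neutral_contains_not_neutral)
    from l(2) have "R d l (\<lambda>x y. if x = m1 \<and> y = m2 then 1 else (0::'k)) \<noteq> 0" by auto
    then obtain I where "I \<in> Cs l" "usgn d l I * (if nths l I = m1 \<and> nths l ({..<length l} - I) = m2 then 1 else (0::'k)) \<noteq> 0"
      unfolding R_idx by (rule sum.not_neutral_contains_not_neutral)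
    hence "I \<in> Cs l" "nths l I = m1" "nths l ({..<length l} - I) = m2" by (auto split: if_splits)
    thus "p \<in> S" using memS[OF l(1)] p by auto
  qed
  have "(\<Sum>(m1,m2)\<in>{p. cop d f p \<noteq> 0}. cop d f (m1,m2) * h m1 m2) = (\<Sum>(m1,m2)\<in>S. cop d f (m1,m2) * h m1 m2)"
    by (rule sum.mono_neutral_left[OF finS sub]) auto
  also have "\<dots> = (\<Sum>(m1,m2)\<in>S. \<Sum>l\<in>?L. f l * (R d l (\<lambda>x y. if x = m1 \<and> y = m2 then 1 else 0) * h m1 m2))"
    unfolding cop_eval by (simp add: sum_distrib_right mult.assoc case_prod_beta)
  also have "\<dots> = (\<Sum>l\<in>?L. f l * (\<Sum>(m1,m2)\<in>S. R d l (\<lambda>x y. if x = m1 \<and> y = m2 then 1 else 0) * h m1 m2))"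
    apply (simp only: sum_distrib_left)
    apply (subst sum.swap)
    by (simp add: case_prod_beta sum_distrib_left)
  also have "\<dots> = (\<Sum>l\<in>?L. f l * R d l h)"
  proof (rule sum.cong[OF refl])
    fix l assume l: "l \<in> ?L"
    have "(\<Sum>(m1,m2)\<in>S. R d l (\<lambda>x y. if x = m1 \<and> y = m2 then 1 else 0) * h m1 m2)
        = R d l (\<lambda>x y. \<Sum>(m1,m2)\<in>S. (if x = m1 \<and> y = m2 then 1 else 0) * h m1 m2)"
      by (simp add: R_sum R_cmult[symmetric] case_prod_beta mult.commute)
    also have "\<dots> = R d l h"
      unfolding R_idx
    proof (rule sum.cong[OF refl])
      fix I assume I: "I \<in> Cs l"
      let ?x = "nths l I" and ?y = "nths l ({..<length l} - I)"
      have "(\<Sum>(m1,m2)\<in>S. (if ?x = m1 \<and> ?y = m2 then 1 else 0) * h m1 m2) = (\<Sum>p\<in>S. if p = (?x,?y) then h ?x ?y else 0)"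
        by (rule sum.cong) (auto split: if_splits)
      also have "\<dots> = h ?x ?y" using memS[OF l I] finS by simp
      finally show "usgn d l I * (\<Sum>(m1,m2)\<in>S. (if ?x = m1 \<and> ?y = m2 then 1 else 0) * h m1 m2) = usgn d l I * h ?x ?y"
        by simp
    qed
    finally show "f l * (\<Sum>(m1,m2)\<in>S. R d l (\<lambda>x y. if x = m1 \<and> y = m2 then 1 else 0) * h m1 m2) = f l * R d l h" by simp
  qed
  finally show ?thesis .
qed



lemma bv_SymC: "valid d l \<Longrightarrow> (bv l :: 'b::{finite,linorder} list \<Rightarrow> 'k::field_char_0) \<in> SymC d"
  by (auto simp: SymC_def bv_def)
lemma bv_homog: "homog d (ldeg d l) (bv l :: 'b list \<Rightarrow> 'k::field_char_0)"
  by (auto simp: homog_def bv_def split: if_splits)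
lemma supp_bv[simp]: "{m. (bv l :: 'b list \<Rightarrow> 'k::field_char_0) m \<noteq> 0} = {l}"
  by (auto simp: bv_def)
lemma bv_self[simp]: "(bv l :: 'b list \<Rightarrow> 'k::field_char_0) l = 1"
  by (simp add: bv_def)

lemma SymC_fin: "f \<in> SymC d \<Longrightarrow> finite {l. f l \<noteq> 0}"
  by (simp add: SymC_def)

lemma SymC_sum:
  assumes "finite A" "\<And>a. a \<in> A \<Longrightarrow> g a \<in> SymC d"
  shows "(\<lambda>l. \<Sum>a\<in>A. c a * g a l) \<in> SymC d"
proof -
  have sub: "{l. (\<Sum>a\<in>A. c a * g a l) \<noteq> 0} \<subseteq> (\<Union>a\<in>A. {l. g a l \<noteq> 0})"
    by (auto elim!: sum.not_neutral_contains_not_neutral)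
  have "finite (\<Union>a\<in>A. {l. g a l \<noteq> 0})" using assms by (auto simp: SymC_def)
  hence "finite {l. (\<Sum>a\<in>A. c a * g a l) \<noteq> 0}" using sub finite_subset by blast
  moreover have "\<forall>l. (\<Sum>a\<in>A. c a * g a l) \<noteq> 0 \<longrightarrow> valid d l"
    using sub assms(2) by (auto simp: SymC_def)
  ultimately show ?thesis by (simp add: SymC_def)
qed

lemma SymC_add: "f \<in> SymC d \<Longrightarrow> g \<in> SymC d \<Longrightarrow> (\<lambda>l. f l + g l) \<in> SymC d"
proof -
  assume a: "f \<in> SymC d" "g \<in> SymC d"
  have "{l. f l + g l \<noteq> 0} \<subseteq> {l. f l \<noteq> 0} \<union> {l. g l \<noteq> 0}" by auto
  thus ?thesis using a by (auto simp: SymC_def intro: finite_subset)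
qed

lemma SymC_cmult: "f \<in> SymC d \<Longrightarrow> (\<lambda>l. c * f l) \<in> SymC d"
proof -
  assume a: "f \<in> SymC d"
  have "{l. c * f l \<noteq> 0} \<subseteq> {l. f l \<noteq> 0}" by auto
  thus ?thesis using a by (auto simp: SymC_def intro: finite_subset)
qed

lemma SymC_zero: "(\<lambda>l. 0) \<in> SymC d" by (simp add: SymC_def)

lemma homog_sum:
  assumes "\<And>a. a \<in> A \<Longrightarrow> homog d n (g a)"
  shows "homog d n (\<lambda>l. \<Sum>a\<in>A. c a * g a l)"
  using assms unfolding homog_def by (auto elim!: sum.not_neutral_contains_not_neutral)

lemma homog_add: "homog d n f \<Longrightarrow> homog d n g \<Longrightarrow> homog d n (\<lambda>l. f l + g l)"
  unfolding homog_def by (metis add.right_neutral)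

lemma SymC_R:
  assumes "valid d l" "\<And>x y. valid d x \<Longrightarrow> valid d y \<Longrightarrow> G x y \<in> SymC d'"
  shows "(\<lambda>l'. R d l (\<lambda>x y. G x y l')) \<in> SymC d'"
  unfolding R_idx
  by (rule SymC_sum[where c="usgn d l" and g="\<lambda>I. G (nths l I) (nths l ({..<length l} - I))", simplified])
     (auto simp: Cs_def intro!: assms(2) nths_valid[OF assms(1)])

lemma homog_R:
  assumes "valid d l" "\<And>x y. valid d x \<Longrightarrow> valid d y \<Longrightarrow> ldeg d x + ldeg d y = ldeg d l \<Longrightarrow> homog d' n (G x y)"
  shows "homog d' n (\<lambda>l'. R d l (\<lambda>x y. G x y l'))"
  unfolding R_idx
  by (rule homog_sum[where c="usgn d l" and g="\<lambda>I. G (nths l I) (nths l ({..<length l} - I))", simplified])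
     (auto simp: Cs_def intro!: assms(2) nths_valid[OF assms(1)] ldeg_split)

definition lin_on :: "('a::{finite,linorder} \<Rightarrow> int) \<Rightarrow> (('a list \<Rightarrow> 'k::field_char_0) \<Rightarrow> ('c \<Rightarrow> 'k)) \<Rightarrow> bool" where
  "lin_on d F \<longleftrightarrow> (\<forall>f\<in>SymC d. \<forall>g\<in>SymC d. F (\<lambda>l. f l + g l) = (\<lambda>l. F f l + F g l))
     \<and> (\<forall>c. \<forall>f\<in>SymC d. F (\<lambda>l. c * f l) = (\<lambda>l. c * F f l))"

lemma linmap_lin: "linmap da db F \<Longrightarrow> lin_on da F"
  by (simp add: linmap_def lin_on_def)

lemma lin_add: "lin_on d F \<Longrightarrow> f \<in> SymC d \<Longrightarrow> g \<in> SymC d \<Longrightarrow> F (\<lambda>l. f l + g l) = (\<lambda>l. F f l + F g l)"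
  unfolding lin_on_def by blast
lemma lin_cmult: "lin_on d F \<Longrightarrow> f \<in> SymC d \<Longrightarrow> F (\<lambda>l. c * f l) = (\<lambda>l. c * F f l)"
  unfolding lin_on_def by blast

lemma lin_sum:
  fixes F :: "('a::{finite,linorder} list \<Rightarrow> 'k::field_char_0) \<Rightarrow> ('c \<Rightarrow> 'k)"
  assumes "lin_on d F" "finite A" "\<And>a. a \<in> A \<Longrightarrow> g a \<in> SymC d"
  shows "F (\<lambda>l. \<Sum>a\<in>A. c a * g a l) = (\<lambda>l'. \<Sum>a\<in>A. c a * F (g a) l')"
  using assms(2,3)
proof (induction A rule: finite_induct)
  case empty
  have h: "\<forall>c. \<forall>f\<in>SymC d. F (\<lambda>l. c * f l) = (\<lambda>l. c * F f l)"
    using assms(1) unfolding lin_on_def by blast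
  from h[rule_format, where c=0 and f="\<lambda>l. 0", OF SymC_zero] show ?case by simp
next
  case (insert a A)
  have s: "(\<lambda>l. \<Sum>b\<in>A. c b * g b l) \<in> SymC d" using insert by (intro SymC_sum) auto
  have ga: "g a \<in> SymC d" using insert by auto
  have "F (\<lambda>l. \<Sum>b\<in>insert a A. c b * g b l) = F (\<lambda>l. (\<lambda>l. c a * g a l) l + (\<lambda>l. \<Sum>b\<in>A. c b * g b l) l)"
    using insert by simp
  also have "\<dots> = (\<lambda>l'. F (\<lambda>l. c a * g a l) l' + F (\<lambda>l. \<Sum>b\<in>A. c b * g b l) l')"
    by (rule lin_add[OF assms(1) SymC_cmult[OF ga] s])
  also have "\<dots> = (\<lambda>l'. \<Sum>b\<in>insert a A. c b * F (g b) l')"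
    using insert lin_cmult[OF assms(1) ga] by auto
  finally show ?case .
qed

lemma SymC_expand: "f \<in> SymC d \<Longrightarrow> f = (\<lambda>l'. \<Sum>l\<in>{l. f l \<noteq> 0}. f l * bv l l')"
proof (rule ext)
  fix l' assume f: "f \<in> SymC d"
  have fin: "finite {l. f l \<noteq> 0}" using f by (simp add: SymC_def)
  have "(\<Sum>l\<in>{l. f l \<noteq> 0}. f l * bv l l') = (\<Sum>l\<in>{l. f l \<noteq> 0}. if l' = l then f l else 0)"
    by (rule sum.cong) (auto simp: bv_def)
  thus "f l' = (\<Sum>l\<in>{l. f l \<noteq> 0}. f l * bv l l')"
    using fin by (simp add: sum.delta')
qed

lemma lin_expand:
  assumes "lin_on d F" "f \<in> SymC d"
  shows "F f = (\<lambda>l'. \<Sum>l\<in>{l. f l \<noteq> 0}. f l * F (bv l) l')"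
proof -
  have "F f = F (\<lambda>l'. \<Sum>l\<in>{l. f l \<noteq> 0}. f l * bv l l')" using SymC_expand[OF assms(2)] by simp
  also have "\<dots> = (\<lambda>l'. \<Sum>l\<in>{l. f l \<noteq> 0}. f l * F (bv l) l')"
    using assms by (intro lin_sum) (auto simp: SymC_def bv_def split: if_splits)
  finally show ?thesis .
qed

lemma lin_R:
  assumes "lin_on d' F" "valid d l" "\<And>x y. valid d x \<Longrightarrow> valid d y \<Longrightarrow> G x y \<in> SymC d'"
  shows "F (\<lambda>l'. R d l (\<lambda>x y. G x y l')) = (\<lambda>l'. R d l (\<lambda>x y. F (G x y) l'))"
  unfolding R_idx
  by (rule lin_sum[where c="usgn d l" and g="\<lambda>I. G (nths l I) (nths l ({..<length l} - I))", simplified, OF assms(1)])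
     (auto simp: Cs_def intro!: assms(3) nths_valid[OF assms(2)])

lemma cop_lin_sum:
  assumes "finite A" "\<And>a. a \<in> A \<Longrightarrow> g a \<in> SymC d"
  shows "cop d (\<lambda>l. \<Sum>a\<in>A. c a * g a l) p = (\<Sum>a\<in>A. c a * cop d (g a) p)"
proof -
  obtain m1 m2 where p: "p = (m1,m2)" by (cases p)
  let ?U = "\<Union>a\<in>A. {l. g a l \<noteq> 0}"
  let ?X = "\<lambda>l. R d l (\<lambda>x y. if x = m1 \<and> y = m2 then 1 else 0)"
  have finU: "finite ?U" using assms by (auto simp: SymC_def)
  have "cop d (\<lambda>l. \<Sum>a\<in>A. c a * g a l) p = (\<Sum>l\<in>?U. (\<Sum>a\<in>A. c a * g a l) * ?X l)"
    unfolding p cop_eval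
    by (rule supp_sum[OF finU]) (auto elim!: sum.not_neutral_contains_not_neutral)
  also have "\<dots> = (\<Sum>a\<in>A. c a * (\<Sum>l\<in>?U. g a l * ?X l))"
    by (simp add: sum_distrib_right sum_distrib_left mult.assoc sum.swap[of _ ?U])
  also have "\<dots> = (\<Sum>a\<in>A. c a * cop d (g a) p)"
    unfolding p cop_eval
    by (rule sum.cong[OF refl], subst supp_sum[OF finU]) auto
  finally show ?thesis .
qed

lemma cop_lin_R:
  assumes "valid d' l" "\<And>x y. valid d' x \<Longrightarrow> valid d' y \<Longrightarrow> G x y \<in> SymC d"
  shows "cop d (\<lambda>l'. R d' l (\<lambda>x y. G x y l')) p = R d' l (\<lambda>x y. cop d (G x y) p)"
  unfolding R_idx
  by (rule cop_lin_sum[where c="usgn d' l" and g="\<lambda>I. G (nths l I) (nths l ({..<length l} - I))", simplified])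
     (auto simp: Cs_def intro!: assms(2) nths_valid[OF assms(1)])

lemma cop_add: "f \<in> SymC d \<Longrightarrow> g \<in> SymC d \<Longrightarrow> cop d (\<lambda>l. f l + g l) p = cop d f p + cop d g p"
  using cop_lin_sum[of "{True,False}" "\<lambda>b. if b then f else g" d "\<lambda>_. 1" p] by simp

lemma tmap_cop:
  fixes f :: "'b::{finite,linorder} list \<Rightarrow> 'k::field_char_0"
  assumes "finite {l. f l \<noteq> 0}"
  shows "tmap d q P Q (cop d f) (x,y) = (\<Sum>l\<in>{l. f l \<noteq> 0}. f l * R d l (\<lambda>u w. koz (q * ldeg d u) * P (bv u) x * Q (bv w) y))"
  unfolding tmap_def using cop_sum[OF assms, of d "\<lambda>u w. koz (q * ldeg d u) * P (bv u) x * Q (bv w) y"]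
  by (simp add: mult.assoc case_prod_beta)

lemma cop_supp_valid:
  assumes "f \<in> SymC d" "cop d f (m1,m2) \<noteq> 0"
  shows "valid d m1 \<and> valid d m2"
proof -
  obtain l where l: "f l \<noteq> 0" "f l * R d l (\<lambda>x y. if x = m1 \<and> y = m2 then 1 else (0::'b)) \<noteq> 0"
    using assms(2) unfolding cop_eval by (auto elim!: sum.not_neutral_contains_not_neutral)
  have v: "valid d l" using assms(1) l(1) by (auto simp: SymC_def)
  from l(2) have "R d l (\<lambda>x y. if x = m1 \<and> y = m2 then 1 else (0::'b)) \<noteq> 0" by auto
  then obtain I where I: "I \<in> Cs l" "usgn d l I * (if nths l I = m1 \<and> nths l ({..<length l} - I) = m2 then 1 else (0::'b)) \<noteq> 0"
    unfolding R_idx by (rule sum.not_neutral_contains_not_neutral)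
  hence "nths l I = m1" "nths l ({..<length l} - I) = m2" by (auto split: if_splits)
  moreover have "{..<length l} - I \<noteq> {}" using I(1) by (auto simp: Cs_def)
  ultimately show ?thesis using I(1) nths_valid[OF v, of I] nths_valid[OF v, of "{..<length l} - I"] by (auto simp: Cs_def)
qed



lemma Int_tmap:
  fixes g :: "'a::{finite,linorder} list \<times> 'b list \<Rightarrow> 'k::field_char_0"
    and P :: "('a list \<Rightarrow> 'k) \<Rightarrow> ('c list \<Rightarrow> 'k)"
    and Q :: "('b list \<Rightarrow> 'k) \<Rightarrow> ('e list \<Rightarrow> 'k)"
  assumes fin: "finite {p. g p \<noteq> 0}"
    and fP: "\<And>p. g p \<noteq> 0 \<Longrightarrow> finite {x. P (bv (fst p)) x \<noteq> 0}"
    and fQ: "\<And>p. g p \<noteq> 0 \<Longrightarrow> finite {y. Q (bv (snd p)) y \<noteq> 0}"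
  shows "(\<Sum>(x,y)\<in>{p. tmap da q P Q g p \<noteq> 0}. tmap da q P Q g (x,y) * h x y)
    = (\<Sum>(m1,m2)\<in>{p. g p \<noteq> 0}. g (m1,m2) * (koz (q * ldeg da m1) *
         (\<Sum>x\<in>{x. P (bv m1) x \<noteq> 0}. \<Sum>y\<in>{y. Q (bv m2) y \<noteq> 0}. P (bv m1) x * Q (bv m2) y * h x y)))"
proof -
  let ?G = "{p. g p \<noteq> 0}"
  let ?X = "\<lambda>p. {x. P (bv (fst p)) x \<noteq> 0}" and ?Y = "\<lambda>p. {y. Q (bv (snd p)) y \<noteq> 0}"
  define S where "S = (\<Union>p\<in>?G. ?X p \<times> ?Y p)"
  have finS: "finite S" unfolding S_def using fin fP fQ by auto
  have tm: "\<And>x y. tmap da q P Q g (x,y) = (\<Sum>p\<in>?G. g p * koz (q * ldeg da (fst p)) * P (bv (fst p)) x * Q (bv (snd p)) y)"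
    by (simp add: tmap_def case_prod_beta)
  have sub: "{p. tmap da q P Q g p \<noteq> 0} \<subseteq> S"
  proof
    fix z assume z: "z \<in> {p. tmap da q P Q g p \<noteq> 0}"
    obtain x y where zz: "z = (x,y)" by (cases z)
    from z have "(\<Sum>p\<in>?G. g p * koz (q * ldeg da (fst p)) * P (bv (fst p)) x * Q (bv (snd p)) y) \<noteq> 0"
      using tm[of x y] unfolding zz by simp
    then obtain p where "p \<in> ?G" "g p * koz (q * ldeg da (fst p)) * P (bv (fst p)) x * Q (bv (snd p)) y \<noteq> 0"
      by (rule sum.not_neutral_contains_not_neutral)
    thus "z \<in> S" unfolding S_def zz by (intro UN_I[of p]) auto
  qed
  have "(\<Sum>(x,y)\<in>{p. tmap da q P Q g p \<noteq> 0}. tmap da q P Q g (x,y) * h x y)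
      = (\<Sum>z\<in>S. tmap da q P Q g z * h (fst z) (snd z))"
    unfolding case_prod_beta prod.collapse by (rule sum.mono_neutral_left[OF finS sub]) auto
  also have "\<dots> = (\<Sum>z\<in>S. \<Sum>p\<in>?G. g p * koz (q * ldeg da (fst p)) * (P (bv (fst p)) (fst z) * Q (bv (snd p)) (snd z) * h (fst z) (snd z)))"
  proof (rule sum.cong[OF refl])
    fix z assume "z \<in> S"
    show "tmap da q P Q g z * h (fst z) (snd z) = (\<Sum>p\<in>?G. g p * koz (q * ldeg da (fst p)) * (P (bv (fst p)) (fst z) * Q (bv (snd p)) (snd z) * h (fst z) (snd z)))"
      using tm[of "fst z" "snd z"] by (simp add: sum_distrib_right mult.assoc)
  qed
  also have "\<dots> = (\<Sum>p\<in>?G. g p * koz (q * ldeg da (fst p)) * (\<Sum>z\<in>S. P (bv (fst p)) (fst z) * Q (bv (snd p)) (snd z) * h (fst z) (snd z)))"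
    by (subst sum.swap) (simp add: sum_distrib_left)
  also have "\<dots> = (\<Sum>p\<in>?G. g p * koz (q * ldeg da (fst p)) * (\<Sum>x\<in>?X p. \<Sum>y\<in>?Y p. P (bv (fst p)) x * Q (bv (snd p)) y * h x y))"
  proof (rule sum.cong[OF refl])
    fix p assume p: "p \<in> ?G"
    have "(\<Sum>z\<in>S. P (bv (fst p)) (fst z) * Q (bv (snd p)) (snd z) * h (fst z) (snd z))
        = (\<Sum>z\<in>?X p \<times> ?Y p. P (bv (fst p)) (fst z) * Q (bv (snd p)) (snd z) * h (fst z) (snd z))"
      by (rule sum.mono_neutral_right[OF finS]) (use p in \<open>auto simp: S_def\<close>)
    also have "\<dots> = (\<Sum>x\<in>?X p. \<Sum>y\<in>?Y p. P (bv (fst p)) x * Q (bv (snd p)) y * h x y)"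
      by (simp only: sum.cartesian_product) (rule sum.cong, auto)
    finally show "g p * koz (q * ldeg da (fst p)) * (\<Sum>z\<in>S. P (bv (fst p)) (fst z) * Q (bv (snd p)) (snd z) * h (fst z) (snd z))
       = g p * koz (q * ldeg da (fst p)) * (\<Sum>x\<in>?X p. \<Sum>y\<in>?Y p. P (bv (fst p)) x * Q (bv (snd p)) y * h x y)" by simp
  qed
  finally show ?thesis by (simp add: case_prod_beta mult.assoc)
qed

lemma Int_add:
  fixes g1 :: "'a \<Rightarrow> 'k::field_char_0"
  assumes "finite {p. g1 p \<noteq> 0}" "finite {p. g2 p \<noteq> 0}"
  shows "(\<Sum>p\<in>{p. g1 p + g2 p \<noteq> 0}. (g1 p + g2 p) * h p)
     = (\<Sum>p\<in>{p. g1 p \<noteq> 0}. g1 p * h p) + (\<Sum>p\<in>{p. g2 p \<noteq> 0}. g2 p * h p)"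
proof -
  let ?S = "{p. g1 p \<noteq> 0} \<union> {p. g2 p \<noteq> 0}"
  have f: "finite ?S" using assms by auto
  have "(\<Sum>p\<in>{p. g1 p + g2 p \<noteq> 0}. (g1 p + g2 p) * h p) = (\<Sum>p\<in>?S. (g1 p + g2 p) * h p)"
    by (rule sum.mono_neutral_left[OF f]) auto
  also have "\<dots> = (\<Sum>p\<in>?S. g1 p * h p) + (\<Sum>p\<in>?S. g2 p * h p)"
    by (simp add: sum.distrib distrib_right)
  also have "(\<Sum>p\<in>?S. g1 p * h p) = (\<Sum>p\<in>{p. g1 p \<noteq> 0}. g1 p * h p)"
    by (rule sum.mono_neutral_right[OF f]) auto
  also have "(\<Sum>p\<in>?S. g2 p * h p) = (\<Sum>p\<in>{p. g2 p \<noteq> 0}. g2 p * h p)"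
    by (rule sum.mono_neutral_right[OF f]) auto
  finally show ?thesis .
qed

lemma tmap_fin:
  fixes g :: "'a::{finite,linorder} list \<times> 'b list \<Rightarrow> 'k::field_char_0"
  assumes fin: "finite {p. g p \<noteq> 0}"
    and fP: "\<And>p. g p \<noteq> 0 \<Longrightarrow> finite {x. P (bv (fst p)) x \<noteq> 0}"
    and fQ: "\<And>p. g p \<noteq> 0 \<Longrightarrow> finite {y. Q (bv (snd p)) y \<noteq> 0}"
  shows "finite {p. tmap da q P Q g p \<noteq> 0}"
proof -
  let ?G = "{p. g p \<noteq> 0}"
  have "{p. tmap da q P Q g p \<noteq> 0} \<subseteq> (\<Union>p\<in>?G. {x. P (bv (fst p)) x \<noteq> 0} \<times> {y. Q (bv (snd p)) y \<noteq> 0})"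
  proof
    fix z assume z: "z \<in> {p. tmap da q P Q g p \<noteq> 0}"
    obtain x y where zz: "z = (x,y)" by (cases z)
    from z have "(\<Sum>p\<in>?G. g p * koz (q * ldeg da (fst p)) * P (bv (fst p)) x * Q (bv (snd p)) y) \<noteq> 0"
      unfolding zz by (simp add: tmap_def case_prod_beta)
    then obtain p where "p \<in> ?G" "g p * koz (q * ldeg da (fst p)) * P (bv (fst p)) x * Q (bv (snd p)) y \<noteq> 0"
      by (rule sum.not_neutral_contains_not_neutral)
    thus "z \<in> (\<Union>p\<in>?G. {x. P (bv (fst p)) x \<noteq> 0} \<times> {y. Q (bv (snd p)) y \<noteq> 0})" unfolding zz by (intro UN_I[of p]) auto
  qed
  moreover have "finite (\<Union>p\<in>?G. {x. P (bv (fst p)) x \<noteq> 0} \<times> {y. Q (bv (snd p)) y \<noteq> 0})"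
    using fin fP fQ by auto
  ultimately show ?thesis using finite_subset by blast
qed

lemma cop_fin:
  fixes f :: "'b::{finite,linorder} list \<Rightarrow> 'k::field_char_0"
  assumes "finite {l. f l \<noteq> 0}"
  shows "finite {p. cop d f p \<noteq> 0}"
proof -
  let ?L = "{l. f l \<noteq> 0}"
  define S where "S = (\<lambda>(l,I). (nths l I, nths l ({..<length l} - I))) ` (Sigma ?L (\<lambda>l. Pow {..<length l}))"
  have finS: "finite S" unfolding S_def using assms by auto
  have "{p. cop d f p \<noteq> 0} \<subseteq> S"
  proof
    fix p assume "p \<in> {p. cop d f p \<noteq> 0}"
    then obtain m1 m2 where p: "p = (m1,m2)" "cop d f (m1,m2) \<noteq> 0" by (cases p) auto
    from p(2) obtain l where l: "l \<in> ?L" "f l * R d l (\<lambda>x y. if x = m1 \<and> y = m2 then 1 else (0::'k)) \<noteq> 0"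
      unfolding cop_eval by (rule sum.not_neutral_contains_not_neutral)
    from l(2) have "R d l (\<lambda>x y. if x = m1 \<and> y = m2 then 1 else (0::'k)) \<noteq> 0" by auto
    then obtain I where "I \<in> Cs l" "usgn d l I * (if nths l I = m1 \<and> nths l ({..<length l} - I) = m2 then 1 else (0::'k)) \<noteq> 0"
      unfolding R_idx by (rule sum.not_neutral_contains_not_neutral)
    hence "I \<in> Cs l" "nths l I = m1" "nths l ({..<length l} - I) = m2" by (auto split: if_splits)
    thus "p \<in> S" using l(1) p unfolding S_def Cs_def by force
  qed
  thus ?thesis using finS finite_subset by blast
qed



lemma R_cmult_in: "c * R d l G = R d l (\<lambda>x y. c * G x y)"
  by (simp add: R_cmult)

lemma G1:
  fixes K :: "'b list \<Rightarrow> 'b list \<Rightarrow> 'b list \<Rightarrow> 'k::field_char_0"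
  shows "R d l (\<lambda>a b. R d b (\<lambda>u w. K a u x * bv w y) + R d b (\<lambda>u w. koz ((ldeg d a + 1) * ldeg d u) * bv u x * K a w y))
   = R d l (\<lambda>a b. R d a (\<lambda>u w. K u w x) * bv b y) + R d l (\<lambda>a b. koz (ldeg d a) * bv a x * R d b (\<lambda>u w. K u w y))"
proof -
  have 1: "R d l (\<lambda>a b. R d b (\<lambda>u w. K a u x * bv w y)) = R d l (\<lambda>a b. R d a (\<lambda>u w. K u w x) * bv b y)"
    using R_coassoc[of d l "\<lambda>a u w. K a u x * bv w y", symmetric]
    by (simp add: R_cmult[symmetric] mult.commute)
  have 2: "R d l (\<lambda>a b. R d b (\<lambda>u w. koz ((ldeg d a + 1) * ldeg d u) * bv u x * K a w y))
     = R d l (\<lambda>a b. koz (ldeg d a) * bv a x * R d b (\<lambda>u w. K u w y))"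
  proof -
    have "R d l (\<lambda>a b. R d b (\<lambda>u w. koz ((ldeg d a + 1) * ldeg d u) * bv u x * K a w y))
        = R d l (\<lambda>s c. R d s (\<lambda>a u. koz ((ldeg d a + 1) * ldeg d u) * bv u x * K a c y))"
      by (rule R_coassoc[symmetric])
    also have "\<dots> = R d l (\<lambda>s c. R d s (\<lambda>a u. koz (ldeg d a) * bv a x * K u c y))"
    proof (rule arg_cong[where f="R d l"], rule ext, rule ext)
      fix s c
      show "R d s (\<lambda>a u. koz ((ldeg d a + 1) * ldeg d u) * bv u x * K a c y) = R d s (\<lambda>a u. koz (ldeg d a) * bv a x * K u c y)"
        apply (subst R_cocomm)
        apply (rule arg_cong[where f="R d s"], rule ext, rule ext)
        subgoal for a u
          apply (simp only: mult.assoc[symmetric] koz_add[symmetric])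
          apply (subst koz_cong[of "ldeg d a * ldeg d u + (ldeg d u + 1) * ldeg d a" "ldeg d a"])
           apply (simp add: algebra_simps)
          by simp
        done
    qed
    also have "\<dots> = R d l (\<lambda>a b. R d b (\<lambda>u w. koz (ldeg d a) * bv a x * K u w y))"
      by (rule R_coassoc)
    also have "\<dots> = R d l (\<lambda>a b. koz (ldeg d a) * bv a x * R d b (\<lambda>u w. K u w y))"
      by (simp add: R_cmult[symmetric] mult.assoc)
    finally show ?thesis .
  qed
  show ?thesis using 1 2 by (simp add: R_add)
qed

lemma G2:
  fixes Z :: "'b list \<Rightarrow> 'b list \<Rightarrow> 'b list \<Rightarrow> 'k::field_char_0"
  shows "R d l (\<lambda>a b. (1/2) * R d a (\<lambda>u w. koz (ldeg d u + 1) * (Z u w b - koz ((ldeg d u + 1) * (ldeg d w + 1)) * Z w u b))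
          + koz (ldeg d a) * R d b (\<lambda>u w. Z a u w)) = 0"
proof -
  have c: "\<And>a b. R d a (\<lambda>u w. koz (ldeg d u + 1) * koz ((ldeg d u + 1) * (ldeg d w + 1)) * Z w u b)
      = R d a (\<lambda>u w. koz (ldeg d u) * Z u w b)"
    apply (subst R_cocomm)
    apply (rule arg_cong[where f="R d _"], rule ext, rule ext)
    subgoal for a b u w
      apply (simp only: mult.assoc[symmetric] koz_add[symmetric])
      apply (rule arg_cong[where f="\<lambda>t. t * Z u w b"])
      apply (rule koz_cong)
      apply (rule dvdI[where k="ldeg d u * ldeg d w + ldeg d w + 1"])
      by (simp add: algebra_simps)
    done
  have kn: "\<And>u. koz (ldeg d u + 1) = - (koz (ldeg d u) :: 'k)" by (simp add: koz_def)
  have t1: "\<And>a b. (1/2) * R d a (\<lambda>u w. koz (ldeg d u + 1) * (Z u w b - koz ((ldeg d u + 1) * (ldeg d w + 1)) * Z w u b))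
      = - R d a (\<lambda>u w. koz (ldeg d u) * Z u w b)"
  proof -
    fix a b
    have "R d a (\<lambda>u w. koz (ldeg d u + 1) * (Z u w b - koz ((ldeg d u + 1) * (ldeg d w + 1)) * Z w u b))
       = R d a (\<lambda>u w. koz (ldeg d u + 1) * Z u w b) - R d a (\<lambda>u w. koz (ldeg d u + 1) * koz ((ldeg d u + 1) * (ldeg d w + 1)) * Z w u b)"
      by (simp add: R_diff[symmetric] right_diff_distrib mult.assoc)
    also have "\<dots> = - R d a (\<lambda>u w. koz (ldeg d u) * Z u w b) - R d a (\<lambda>u w. koz (ldeg d u) * Z u w b)"
      apply (subst c) by (simp add: kn R_neg)
    finally show "(1/2) * R d a (\<lambda>u w. koz (ldeg d u + 1) * (Z u w b - koz ((ldeg d u + 1) * (ldeg d w + 1)) * Z w u b))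
      = - R d a (\<lambda>u w. koz (ldeg d u) * Z u w b)" by simp
  qed
  have t2: "R d l (\<lambda>a b. koz (ldeg d a) * R d b (\<lambda>u w. Z a u w)) = R d l (\<lambda>a b. R d a (\<lambda>u w. koz (ldeg d u) * Z u w b))"
    using R_coassoc[of d l "\<lambda>a u w. koz (ldeg d a) * Z a u w"] by (simp add: R_cmult[symmetric])
  show ?thesis
    apply (simp only: t1 R_add t2)
    by (simp add: R_neg)
qed



lemma tmap_addP: "tmap da q (\<lambda>f l. P1 f l + P2 f l) Q g p = tmap da q P1 Q g p + tmap da q P2 Q g p"
  by (simp add: tmap_def case_prod_beta sum.distrib[symmetric] algebra_simps)
lemma tmap_addQ: "tmap da q P (\<lambda>f l. Q1 f l + Q2 f l) g p = tmap da q P Q1 g p + tmap da q P Q2 g p"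
  by (simp add: tmap_def case_prod_beta sum.distrib[symmetric] algebra_simps)

lemma cop_bv_tmap: fixes b :: "'b::{finite,linorder} list" and P :: "('b list \<Rightarrow> 'k::field_char_0) \<Rightarrow> ('c list \<Rightarrow> 'k)" shows "tmap d q P Q (cop d (bv b)) (x,y) = R d b (\<lambda>u w. koz (q * ldeg d u) * P (bv u) x * Q (bv w) y)"
  using tmap_cop[of "bv b :: 'b list \<Rightarrow> 'k" d q P Q x y] by simp

locale ctx =
  fixes dE :: "'e::{finite,linorder} \<Rightarrow> int"
    and dV :: "'v::{finite,linorder} \<Rightarrow> int"
    and ME :: "('e list \<Rightarrow> 'k::field_char_0) \<Rightarrow> ('e list \<Rightarrow> 'k)"
    and MV :: "('v list \<Rightarrow> 'k) \<Rightarrow> ('v list \<Rightarrow> 'k)"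
    and Phi :: "('e list \<Rightarrow> 'k) \<Rightarrow> ('v list \<Rightarrow> 'k) \<Rightarrow> ('v list \<Rightarrow> 'k)"
    and T :: "('v list \<Rightarrow> 'k) \<Rightarrow> ('e list \<Rightarrow> 'k)"
  assumes hE: "lie_inf dE ME"
    and hV: "lie_inf dV MV"
    and hA: "action dE dV ME MV Phi"
    and hO: "O_operator dE dV ME MV Phi T"
begin

abbreviation "PT \<equiv> PhiT dV Phi T"

lemma T_linmap: "linmap dV dE T" using hO by (simp add: O_operator_def comorph_def)
lemma T_deg: "degmap dV dE 0 T" using hO by (simp add: O_operator_def comorph_def)
lemma T_com: "f \<in> SymC dV \<Longrightarrow> cop dE (T f) = tmap dV 0 T T (cop dV f)"
  using hO by (simp add: O_operator_def comorph_def)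
lemma T_O: "f \<in> SymC dV \<Longrightarrow> ME (T f) = T (\<lambda>l. PT f l + MV f l)"
  using hO by (simp add: O_operator_def)
lemma T_S: "f \<in> SymC dV \<Longrightarrow> T f \<in> SymC dE" using T_linmap by (simp add: linmap_def)
lemma T_lin: "lin_on dV T" using T_linmap by (rule linmap_lin)
lemma T_bv_S: "valid dV a \<Longrightarrow> T (bv a) \<in> SymC dE" by (rule T_S[OF bv_SymC])
lemma T_bv_h: "valid dV a \<Longrightarrow> homog dE (ldeg dV a) (T (bv a))"
  using T_deg bv_SymC bv_homog unfolding degmap_def by fastforce

lemma Phi_add: "x \<in> SymC dE \<Longrightarrow> y \<in> SymC dE \<Longrightarrow> f \<in> SymC dV \<Longrightarrow> Phi (\<lambda>l. x l + y l) f = (\<lambda>l. Phi x f l + Phi y f l)"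
  using hA by (simp add: action_def)
lemma Phi_cmult: "x \<in> SymC dE \<Longrightarrow> f \<in> SymC dV \<Longrightarrow> Phi (\<lambda>l. c * x l) f = (\<lambda>l. c * Phi x f l)"
  using hA by (simp add: action_def)
lemma Phi_x_lin: "f \<in> SymC dV \<Longrightarrow> lin_on dE (\<lambda>x. Phi x f)"
  unfolding lin_on_def using Phi_add Phi_cmult by blast
lemma Phi_coder: "x \<in> SymC dE \<Longrightarrow> homog dE n x \<Longrightarrow> coder dV (n+1) (Phi x)"
  using hA by (simp add: action_def)
lemma Phi_linmap: "x \<in> SymC dE \<Longrightarrow> homog dE n x \<Longrightarrow> linmap dV dV (Phi x)"
  using Phi_coder by (simp add: coder_def)
lemma Phi_lin: "x \<in> SymC dE \<Longrightarrow> homog dE n x \<Longrightarrow> lin_on dV (Phi x)"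
  using Phi_linmap linmap_lin by blast
lemma Phi_S: "x \<in> SymC dE \<Longrightarrow> homog dE n x \<Longrightarrow> f \<in> SymC dV \<Longrightarrow> Phi x f \<in> SymC dV"
  using Phi_linmap by (simp add: linmap_def)
lemma Phi_h: "x \<in> SymC dE \<Longrightarrow> homog dE n x \<Longrightarrow> f \<in> SymC dV \<Longrightarrow> homog dV m f \<Longrightarrow> homog dV (m + (n+1)) (Phi x f)"
  using Phi_coder by (simp add: coder_def degmap_def)
lemma Phi_cop: "x \<in> SymC dE \<Longrightarrow> homog dE n x \<Longrightarrow> f \<in> SymC dV \<Longrightarrow>
   cop dV (Phi x f) = (\<lambda>p. tmap dV 0 (Phi x) id (cop dV f) p + tmap dV (n+1) id (Phi x) (cop dV f) p)"
  using Phi_coder by (simp add: coder_def)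
lemma Phi_eq: "x \<in> SymC dE \<Longrightarrow> homog dE n x \<Longrightarrow> f \<in> SymC dV \<Longrightarrow>
   Phi (ME x) f = (\<lambda>l. dDiff MV (n + 1) (Phi x) f l
            + (1/2) * (\<Sum>(m1,m2)\<in>{p. cop dE x p \<noteq> 0}. cop dE x (m1,m2) *
                 brk (ldeg dE m1 + 1) (ldeg dE m2 + 1) (Phi (bv m1)) (Phi (bv m2)) f l))"
  using hA unfolding action_def by blast

lemma MV_coder: "coder dV 1 MV" using hV by (simp add: lie_inf_def)
lemma MV_linmap: "linmap dV dV MV" using MV_coder by (simp add: coder_def)
lemma MV_S: "f \<in> SymC dV \<Longrightarrow> MV f \<in> SymC dV" using MV_linmap by (simp add: linmap_def)
lemma MV_lin: "lin_on dV MV" using MV_linmap by (rule linmap_lin)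
lemma MV_sq: "f \<in> SymC dV \<Longrightarrow> MV (MV f) = (\<lambda>l. 0)" using hV by (simp add: lie_inf_def)

lemma Ph_S: "valid dV a \<Longrightarrow> valid dV b \<Longrightarrow> Phi (T (bv a)) (bv b) \<in> SymC dV"
  by (rule Phi_S[OF T_bv_S T_bv_h bv_SymC])
lemma Ph_h: "valid dV a \<Longrightarrow> valid dV b \<Longrightarrow> homog dV (ldeg dV b + (ldeg dV a + 1)) (Phi (T (bv a)) (bv b))"
  by (rule Phi_h[OF T_bv_S T_bv_h bv_SymC bv_homog])

lemma PT_R: "f \<in> SymC dV \<Longrightarrow> PT f = (\<lambda>l'. \<Sum>l\<in>{l. f l \<noteq> 0}. f l * R dV l (\<lambda>a b. Phi (T (bv a)) (bv b) l'))"
proof (rule ext)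
  fix l' assume f: "f \<in> SymC dV"
  show "PT f l' = (\<Sum>l\<in>{l. f l \<noteq> 0}. f l * R dV l (\<lambda>a b. Phi (T (bv a)) (bv b) l'))"
    unfolding PhiT_def using cop_sum[OF SymC_fin[OF f], of dV "\<lambda>a b. Phi (T (bv a)) (bv b) l'"] by simp
qed

lemma PT_bv: "valid dV a \<Longrightarrow> PT (bv a) = (\<lambda>l'. R dV a (\<lambda>u w. Phi (T (bv u)) (bv w) l'))"
  by (simp add: PT_R[OF bv_SymC])

lemma PT_S: "f \<in> SymC dV \<Longrightarrow> PT f \<in> SymC dV"
proof -
  assume f: "f \<in> SymC dV"
  have v: "\<And>l. f l \<noteq> 0 \<Longrightarrow> valid dV l" using f by (simp add: SymC_def)
  have "\<And>l. l \<in> {l. f l \<noteq> 0} \<Longrightarrow> (\<lambda>l'. R dV l (\<lambda>a b. Phi (T (bv a)) (bv b) l')) \<in> SymC dV"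
    by (rule SymC_R) (auto intro: v Ph_S)
  thus ?thesis unfolding PT_R[OF f]
    by (rule SymC_sum[where c=f and g="\<lambda>l l'. R dV l (\<lambda>a b. Phi (T (bv a)) (bv b) l')", simplified, OF SymC_fin[OF f]])
qed

lemma PT_h: "f \<in> SymC dV \<Longrightarrow> homog dV n f \<Longrightarrow> homog dV (n+1) (PT f)"
  unfolding PT_R
  apply (rule homog_sum[where c=f and g="\<lambda>l l'. R dV l (\<lambda>a b. Phi (T (bv a)) (bv b) l')", simplified])
  apply (rule homog_R)
   apply (auto simp: SymC_def)[1]
  subgoal for l x y
    using Ph_h[of x y] by (auto simp: homog_def SymC_def algebra_simps)
  done

lemma supp_add_sub: "{l. f l + g l \<noteq> 0} \<subseteq> {l. f l \<noteq> 0} \<union> {l. (g l :: 'k) \<noteq> 0}" by auto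

lemma PT_add: "f \<in> SymC dV \<Longrightarrow> g \<in> SymC dV \<Longrightarrow> PT (\<lambda>l. f l + g l) = (\<lambda>l. PT f l + PT g l)"
proof -
  assume f: "f \<in> SymC dV" and g: "g \<in> SymC dV"
  let ?U = "{l. f l \<noteq> 0} \<union> {l. g l \<noteq> 0}"
  have fin: "finite ?U" using f g by (simp add: SymC_fin)
  show ?thesis
    unfolding PT_R[OF f] PT_R[OF g] PT_R[OF SymC_add[OF f g]]
    apply (rule ext)
    apply (subst supp_sum[OF fin supp_add_sub])
    apply (subst supp_sum[OF fin, of f], blast)
    apply (subst supp_sum[OF fin, of g], blast)
    by (simp add: sum.distrib distrib_right)
qed

lemma PT_cmult: "f \<in> SymC dV \<Longrightarrow> PT (\<lambda>l. c * f l) = (\<lambda>l. c * PT f l)"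
proof -
  assume f: "f \<in> SymC dV"
  have fin: "finite {l. f l \<noteq> 0}" using f by (simp add: SymC_fin)
  show ?thesis
    unfolding PT_R[OF f] PT_R[OF SymC_cmult[OF f]]
    apply (rule ext)
    apply (subst supp_sum[OF fin], force)
    by (simp add: sum_distrib_left mult.assoc)
qed

lemma PT_linmap: "linmap dV dV PT"
  unfolding linmap_def using PT_S PT_add PT_cmult by blast

end


context ctx begin

lemma PT_cop:
  assumes f: "f \<in> SymC dV"
  shows "cop dV (PT f) = (\<lambda>p. tmap dV 0 PT id (cop dV f) p + tmap dV 1 id PT (cop dV f) p)"
proof (rule ext)
  fix p
  obtain x y :: "'v list" where p: "p = (x,y)" by (cases p)
  let ?L = "{l. f l \<noteq> 0}"
  have fin: "finite ?L" using f by (simp add: SymC_fin)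
  have v: "\<And>l. l \<in> ?L \<Longrightarrow> valid dV l" using f by (simp add: SymC_def)
  let ?g = "\<lambda>l l'. R dV l (\<lambda>a b. Phi (T (bv a)) (bv b) l')"
  have gS: "\<And>l. l \<in> ?L \<Longrightarrow> ?g l \<in> SymC dV"
    by (rule SymC_R) (auto intro: v Ph_S)
  have copPh: "\<And>a b. valid dV a \<Longrightarrow> valid dV b \<Longrightarrow> cop dV (Phi (T (bv a)) (bv b)) (x,y)
     = R dV b (\<lambda>u w. Phi (T (bv a)) (bv u) x * bv w y) + R dV b (\<lambda>u w. koz ((ldeg dV a + 1) * ldeg dV u) * bv u x * Phi (T (bv a)) (bv w) y)"
    by (simp add: Phi_cop[OF T_bv_S T_bv_h bv_SymC] cop_bv_tmap)
  have "cop dV (PT f) (x,y) = (\<Sum>l\<in>?L. f l * cop dV (?g l) (x,y))"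
    unfolding PT_R[OF f] by (rule cop_lin_sum[OF fin gS])
  also have "\<dots> = (\<Sum>l\<in>?L. f l * R dV l (\<lambda>a b. R dV b (\<lambda>u w. Phi (T (bv a)) (bv u) x * bv w y)
        + R dV b (\<lambda>u w. koz ((ldeg dV a + 1) * ldeg dV u) * bv u x * Phi (T (bv a)) (bv w) y)))"
  proof (rule sum.cong[OF refl])
    fix l assume l: "l \<in> ?L"
    show "f l * cop dV (?g l) (x,y) = f l * R dV l (\<lambda>a b. R dV b (\<lambda>u w. Phi (T (bv a)) (bv u) x * bv w y)
        + R dV b (\<lambda>u w. koz ((ldeg dV a + 1) * ldeg dV u) * bv u x * Phi (T (bv a)) (bv w) y))"
      apply (subst cop_lin_R[OF v[OF l] Ph_S], assumption+)
      apply (rule arg_cong[where f="\<lambda>t. f l * t"])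
      apply (rule R_cong_valid[OF v[OF l]])
      by (rule copPh)
  qed
  also have "\<dots> = (\<Sum>l\<in>?L. f l * R dV l (\<lambda>a b. R dV a (\<lambda>u w. Phi (T (bv u)) (bv w) x) * bv b y))
       + (\<Sum>l\<in>?L. f l * R dV l (\<lambda>a b. koz (ldeg dV a) * bv a x * R dV b (\<lambda>u w. Phi (T (bv u)) (bv w) y)))"
    by (simp add: G1[of dV _ "\<lambda>a u z. Phi (T (bv a)) (bv u) z"] sum.distrib distrib_left)
  also have "(\<Sum>l\<in>?L. f l * R dV l (\<lambda>a b. R dV a (\<lambda>u w. Phi (T (bv u)) (bv w) x) * bv b y))
      = tmap dV 0 PT id (cop dV f) (x,y)"
    unfolding tmap_cop[OF fin]
  proof (rule sum.cong[OF refl])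
    fix l assume l: "l \<in> ?L"
    show "f l * R dV l (\<lambda>a b. R dV a (\<lambda>u w. Phi (T (bv u)) (bv w) x) * bv b y)
      = f l * R dV l (\<lambda>u w. koz (0 * ldeg dV u) * PT (bv u) x * id (bv w) y)"
      apply (rule arg_cong[where f="\<lambda>t. f l * t"])
      apply (rule R_cong_valid[OF v[OF l]])
      by (simp add: PT_bv)
  qed
  also have "(\<Sum>l\<in>?L. f l * R dV l (\<lambda>a b. koz (ldeg dV a) * bv a x * R dV b (\<lambda>u w. Phi (T (bv u)) (bv w) y)))
      = tmap dV 1 id PT (cop dV f) (x,y)"
    unfolding tmap_cop[OF fin]
  proof (rule sum.cong[OF refl])
    fix l assume l: "l \<in> ?L"
    show "f l * R dV l (\<lambda>a b. koz (ldeg dV a) * bv a x * R dV b (\<lambda>u w. Phi (T (bv u)) (bv w) y))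
      = f l * R dV l (\<lambda>u w. koz (1 * ldeg dV u) * id (bv u) x * PT (bv w) y)"
      apply (rule arg_cong[where f="\<lambda>t. f l * t"])
      apply (rule R_cong_valid[OF v[OF l]])
      by (simp add: PT_bv)
  qed
  finally show "cop dV (PT f) p = tmap dV 0 PT id (cop dV f) p + tmap dV 1 id PT (cop dV f) p"
    unfolding p .
qed

lemma PT_coder: "coder dV 1 PT"
  unfolding coder_def degmap_def using PT_linmap PT_h PT_cop by blast

abbreviation "NN \<equiv> (\<lambda>f l. PT f l + MV f l)"

lemma NN_S: "f \<in> SymC dV \<Longrightarrow> NN f \<in> SymC dV"
  by (rule SymC_add[OF PT_S MV_S])

lemma NN_coder: "coder dV 1 NN"
proof -
  have lm: "linmap dV dV NN"
    unfolding linmap_def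
  proof (intro conjI ballI allI)
    fix f :: "'v list \<Rightarrow> 'k" assume "f \<in> SymC dV" thus "NN f \<in> SymC dV" by (rule NN_S)
  next
    fix f g :: "'v list \<Rightarrow> 'k" assume f: "f \<in> SymC dV" and g: "g \<in> SymC dV"
    show "NN (\<lambda>l. f l + g l) = (\<lambda>l. NN f l + NN g l)"
      using PT_add[OF f g] lin_add[OF MV_lin f g] by (simp add: fun_eq_iff)
  next
    fix c and f :: "'v list \<Rightarrow> 'k" assume f: "f \<in> SymC dV"
    show "NN (\<lambda>l. c * f l) = (\<lambda>l. c * NN f l)"
      using PT_cmult[OF f] lin_cmult[OF MV_lin f] by (simp add: fun_eq_iff distrib_left)
  qed
  have dg: "degmap dV dV 1 NN"
    unfolding degmap_def
  proof (intro allI ballI impI)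
    fix n and f :: "'v list \<Rightarrow> 'k" assume f: "f \<in> SymC dV" and h: "homog dV n f"
    have "homog dV (n+1) (MV f)" using MV_coder f h by (simp add: coder_def degmap_def)
    thus "homog dV (n+1) (NN f)" using PT_h[OF f h] by (rule homog_add[rotated])
  qed
  have cp: "\<forall>f\<in>SymC dV. cop dV (NN f) = (\<lambda>p. tmap dV 0 NN id (cop dV f) p + tmap dV 1 id NN (cop dV f) p)"
  proof
    fix f :: "'v list \<Rightarrow> 'k" assume f: "f \<in> SymC dV"
    have m: "cop dV (MV f) = (\<lambda>p. tmap dV 0 MV id (cop dV f) p + tmap dV 1 id MV (cop dV f) p)"
      using MV_coder f by (simp add: coder_def)
    show "cop dV (NN f) = (\<lambda>p. tmap dV 0 NN id (cop dV f) p + tmap dV 1 id NN (cop dV f) p)"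
      apply (rule ext)
      apply (subst cop_add[OF PT_S[OF f] MV_S[OF f]])
      apply (simp only: PT_cop[OF f] m tmap_addP tmap_addQ)
      by simp
  qed
  show ?thesis unfolding coder_def using lm dg cp by blast
qed

end


context ctx begin

lemma bv_h': "homog dE (ldeg dE e) (bv e :: 'e list \<Rightarrow> 'k)" by (rule bv_homog)

lemma DS0:
  assumes X: "X \<in> SymC dE" "homog dE nx X" and Y: "Y \<in> SymC dE" "homog dE ny Y" and B: "B \<in> SymC dV"
  shows "(\<Sum>e1\<in>{e. X e \<noteq> 0}. \<Sum>e2\<in>{e. Y e \<noteq> 0}. X e1 * Y e2 * Phi (bv e1) (Phi (bv e2) B) l') = Phi X (Phi Y B) l'"
proof -
  have vX: "\<And>e. e \<in> {e. X e \<noteq> 0} \<Longrightarrow> valid dE e" using X by (simp add: SymC_def)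
  have vY: "\<And>e. e \<in> {e. Y e \<noteq> 0} \<Longrightarrow> valid dE e" using Y by (simp add: SymC_def)
  have finY: "finite {e. Y e \<noteq> 0}" using Y by (simp add: SymC_fin)
  have YB: "Phi Y B = (\<lambda>l'. \<Sum>e2\<in>{e. Y e \<noteq> 0}. Y e2 * Phi (bv e2) B l')"
    using lin_expand[OF Phi_x_lin[OF B] Y(1)] by simp
  have YBS: "Phi Y B \<in> SymC dV" by (rule Phi_S[OF Y B])
  have "(\<Sum>e1\<in>{e. X e \<noteq> 0}. \<Sum>e2\<in>{e. Y e \<noteq> 0}. X e1 * Y e2 * Phi (bv e1) (Phi (bv e2) B) l')
      = (\<Sum>e1\<in>{e. X e \<noteq> 0}. X e1 * Phi (bv e1) (Phi Y B) l')"
  proof (rule sum.cong[OF refl])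
    fix e1 assume e1: "e1 \<in> {e. X e \<noteq> 0}"
    have "Phi (bv e1) (Phi Y B) = (\<lambda>l'. \<Sum>e2\<in>{e. Y e \<noteq> 0}. Y e2 * Phi (bv e1) (Phi (bv e2) B) l')"
      unfolding YB
      by (rule lin_sum[OF Phi_lin[OF bv_SymC[OF vX[OF e1]] bv_h'] finY])
         (rule Phi_S[OF bv_SymC[OF vY] bv_h' B], assumption)
    thus "(\<Sum>e2\<in>{e. Y e \<noteq> 0}. X e1 * Y e2 * Phi (bv e1) (Phi (bv e2) B) l') = X e1 * Phi (bv e1) (Phi Y B) l'"
      by (simp add: sum_distrib_left mult.assoc)
  qed
  also have "\<dots> = Phi X (Phi Y B) l'"
    using lin_expand[OF Phi_x_lin[OF YBS] X(1)] by (simp add: fun_eq_iff)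
  finally show ?thesis .
qed

lemma DS:
  assumes X: "X \<in> SymC dE" "homog dE nx X" and Y: "Y \<in> SymC dE" "homog dE ny Y" and B: "B \<in> SymC dV"
  shows "(\<Sum>e1\<in>{e. X e \<noteq> 0}. \<Sum>e2\<in>{e. Y e \<noteq> 0}. X e1 * Y e2 *
            brk (ldeg dE e1 + 1) (ldeg dE e2 + 1) (Phi (bv e1)) (Phi (bv e2)) B l')
       = brk (nx + 1) (ny + 1) (Phi X) (Phi Y) B l'"
proof -
  let ?q = "nx + 1" and ?p = "ny + 1"
  let ?A = "\<lambda>e1 e2. Phi (bv e1) (Phi (bv e2) B) l'" and ?C = "\<lambda>e1 e2. Phi (bv e2) (Phi (bv e1) B) l'"
  have "(\<Sum>e1\<in>{e. X e \<noteq> 0}. \<Sum>e2\<in>{e. Y e \<noteq> 0}. X e1 * Y e2 *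
            brk (ldeg dE e1 + 1) (ldeg dE e2 + 1) (Phi (bv e1)) (Phi (bv e2)) B l')
     = (\<Sum>e1\<in>{e. X e \<noteq> 0}. \<Sum>e2\<in>{e. Y e \<noteq> 0}. koz ?q * (X e1 * Y e2 * ?A e1 e2) - koz ?q * koz (?q * ?p) * (Y e2 * X e1 * ?C e1 e2))"
    apply (rule sum.cong[OF refl])+
    using X(2) Y(2) by (auto simp: homog_def brk_def algebra_simps)
  also have "\<dots> = koz ?q * (\<Sum>e1\<in>{e. X e \<noteq> 0}. \<Sum>e2\<in>{e. Y e \<noteq> 0}. X e1 * Y e2 * ?A e1 e2)
      - koz ?q * koz (?q * ?p) * (\<Sum>e2\<in>{e. Y e \<noteq> 0}. \<Sum>e1\<in>{e. X e \<noteq> 0}. Y e2 * X e1 * ?C e1 e2)"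
    by (simp add: sum_subtractf sum_distrib_left sum.swap[of _ "{e. Y e \<noteq> 0}"])
  also have "\<dots> = brk ?q ?p (Phi X) (Phi Y) B l'"
    using DS0[OF X Y B, of l'] DS0[OF Y X B, of l'] by (simp add: brk_def algebra_simps)
  finally show ?thesis .
qed

end


lemma Int_cop_tmap:
  fixes f :: "'a::{finite,linorder} list \<Rightarrow> 'k::field_char_0"
    and P :: "('a list \<Rightarrow> 'k) \<Rightarrow> ('c::{finite,linorder} list \<Rightarrow> 'k)"
    and Q :: "('a list \<Rightarrow> 'k) \<Rightarrow> ('e::{finite,linorder} list \<Rightarrow> 'k)"
  assumes f: "f \<in> SymC d"
    and P: "\<And>m. valid d m \<Longrightarrow> P (bv m) \<in> SymC dc"
    and Q: "\<And>m. valid d m \<Longrightarrow> Q (bv m) \<in> SymC de"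
  shows "(\<Sum>(x,y)\<in>{p. tmap d q P Q (cop d f) p \<noteq> 0}. tmap d q P Q (cop d f) (x,y) * h x y)
    = (\<Sum>l\<in>{l. f l \<noteq> 0}. f l * R d l (\<lambda>m1 m2. koz (q * ldeg d m1) *
         (\<Sum>x\<in>{x. P (bv m1) x \<noteq> 0}. \<Sum>y\<in>{y. Q (bv m2) y \<noteq> 0}. P (bv m1) x * Q (bv m2) y * h x y)))"
proof -
  have fin: "finite {l. f l \<noteq> 0}" using f by (rule SymC_fin)
  have vp: "\<And>p. cop d f p \<noteq> 0 \<Longrightarrow> valid d (fst p) \<and> valid d (snd p)"
    using cop_supp_valid[OF f] by (metis prod.collapse)
  show ?thesis
    apply (subst Int_tmap[OF cop_fin[OF fin]])
      apply (rule SymC_fin, rule P, use vp in blast)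
     apply (rule SymC_fin, rule Q, use vp in blast)
    by (rule cop_sum[OF fin])
qed

context ctx begin

lemma lin_PhiT_z: "B \<in> SymC dV \<Longrightarrow> lin_on dV (\<lambda>z. Phi (T z) B)"
  unfolding lin_on_def
  using lin_add[OF T_lin] lin_cmult[OF T_lin] T_S Phi_add Phi_cmult by simp

lemma PT_W:
  assumes W: "coder dV 1 W" and f: "f \<in> SymC dV"
  shows "PT (W f) l' = (\<Sum>l\<in>{l. f l \<noteq> 0}. f l * R dV l (\<lambda>a b. Phi (T (W (bv a))) (bv b) l'
            + koz (ldeg dV a) * Phi (T (bv a)) (W (bv b)) l'))"
proof -
  have WS: "\<And>g. g \<in> SymC dV \<Longrightarrow> W g \<in> SymC dV" using W by (simp add: coder_def linmap_def)
  have Wl: "lin_on dV W" using W unfolding coder_def by (blast intro: linmap_lin)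
  have cw: "cop dV (W f) = (\<lambda>p. tmap dV 0 W id (cop dV f) p + tmap dV 1 id W (cop dV f) p)"
    using W f by (simp add: coder_def)
  have fin: "finite {l. f l \<noteq> 0}" using f by (rule SymC_fin)
  have v: "\<And>l. l \<in> {l. f l \<noteq> 0} \<Longrightarrow> valid dV l" using f by (simp add: SymC_def)
  have vp: "\<And>p. cop dV f p \<noteq> 0 \<Longrightarrow> valid dV (fst p) \<and> valid dV (snd p)"
    using cop_supp_valid[OF f] by (metis prod.collapse)
  have fin1: "finite {p. tmap dV 0 W id (cop dV f) p \<noteq> 0}"
    by (rule tmap_fin[OF cop_fin[OF fin]]) (auto intro!: SymC_fin WS bv_SymC dest: vp)
  have fin2: "finite {p. tmap dV 1 id W (cop dV f) p \<noteq> 0}"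
    by (rule tmap_fin[OF cop_fin[OF fin]]) (auto intro!: SymC_fin WS bv_SymC dest: vp)
  let ?h = "\<lambda>x y. Phi (T (bv x)) (bv y) l'"
  have WSb: "\<And>m. valid dV m \<Longrightarrow> W (bv m) \<in> SymC dV" by (rule WS[OF bv_SymC])
  have idS: "\<And>m. valid dV m \<Longrightarrow> id (bv m) \<in> SymC dV" by (simp add: bv_SymC)
  have "PT (W f) l' = (\<Sum>p\<in>{p. tmap dV 0 W id (cop dV f) p + tmap dV 1 id W (cop dV f) p \<noteq> 0}.
          (tmap dV 0 W id (cop dV f) p + tmap dV 1 id W (cop dV f) p) * ?h (fst p) (snd p))"
    unfolding PhiT_def cw by (simp add: case_prod_beta)
  also have "\<dots> = (\<Sum>p\<in>{p. tmap dV 0 W id (cop dV f) p \<noteq> 0}. tmap dV 0 W id (cop dV f) p * ?h (fst p) (snd p))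
      + (\<Sum>p\<in>{p. tmap dV 1 id W (cop dV f) p \<noteq> 0}. tmap dV 1 id W (cop dV f) p * ?h (fst p) (snd p))"
    by (rule Int_add[OF fin1 fin2])
  also have "(\<Sum>p\<in>{p. tmap dV 0 W id (cop dV f) p \<noteq> 0}. tmap dV 0 W id (cop dV f) p * ?h (fst p) (snd p))
     = (\<Sum>l\<in>{l. f l \<noteq> 0}. f l * R dV l (\<lambda>a b. Phi (T (W (bv a))) (bv b) l'))"
    using Int_cop_tmap[where P=W and Q=id and q=0 and h="?h", OF f WSb idS]
    apply (simp add: case_prod_beta)
    apply (rule sum.cong[OF refl])
    apply (rule arg_cong[where f="\<lambda>t. f _ * t"])
    apply (rule R_cong_valid, simp add: v)
    subgoal for l a b
      using lin_expand[OF lin_PhiT_z[OF bv_SymC] WS[OF bv_SymC], of b a] by (simp add: fun_eq_iff)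
    done
  also have "(\<Sum>p\<in>{p. tmap dV 1 id W (cop dV f) p \<noteq> 0}. tmap dV 1 id W (cop dV f) p * ?h (fst p) (snd p))
     = (\<Sum>l\<in>{l. f l \<noteq> 0}. f l * R dV l (\<lambda>a b. koz (ldeg dV a) * Phi (T (bv a)) (W (bv b)) l'))"
    using Int_cop_tmap[where P=id and Q=W and q=1 and h="?h", OF f idS WSb]
    apply (simp add: case_prod_beta)
    apply (rule sum.cong[OF refl])
    apply (rule arg_cong[where f="\<lambda>t. f _ * t"])
    apply (rule R_cong_valid, simp add: v)
    subgoal for l a b
      using lin_expand[OF Phi_lin[OF T_bv_S T_bv_h] WS[OF bv_SymC], of a b] by (simp add: fun_eq_iff)
    done
  finally show ?thesis by (simp add: R_add sum.distrib distrib_left)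
qed

lemma MV_PT:
  assumes f: "f \<in> SymC dV"
  shows "MV (PT f) l' = (\<Sum>l\<in>{l. f l \<noteq> 0}. f l * R dV l (\<lambda>a b. MV (Phi (T (bv a)) (bv b)) l'))"
proof -
  have fin: "finite {l. f l \<noteq> 0}" using f by (rule SymC_fin)
  have v: "\<And>l. l \<in> {l. f l \<noteq> 0} \<Longrightarrow> valid dV l" using f by (simp add: SymC_def)
  have gS: "\<And>l. l \<in> {l. f l \<noteq> 0} \<Longrightarrow> (\<lambda>l'. R dV l (\<lambda>a b. Phi (T (bv a)) (bv b) l')) \<in> SymC dV"
    by (rule SymC_R) (auto intro: v Ph_S)
  have "MV (PT f) = (\<lambda>l'. \<Sum>l\<in>{l. f l \<noteq> 0}. f l * MV (\<lambda>l'. R dV l (\<lambda>a b. Phi (T (bv a)) (bv b) l')) l')"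
    unfolding PT_R[OF f] by (rule lin_sum[OF MV_lin fin gS])
  also have "\<dots> = (\<lambda>l'. \<Sum>l\<in>{l. f l \<noteq> 0}. f l * R dV l (\<lambda>a b. MV (Phi (T (bv a)) (bv b)) l'))"
    apply (rule ext, rule sum.cong[OF refl])
    by (subst lin_R[OF MV_lin v Ph_S]) auto
  finally show ?thesis by simp
qed

lemma Brk:
  assumes a: "valid dV a" and B: "B \<in> SymC dV"
  shows "(\<Sum>(m1,m2)\<in>{p. cop dE (T (bv a)) p \<noteq> 0}. cop dE (T (bv a)) (m1,m2) *
            brk (ldeg dE m1 + 1) (ldeg dE m2 + 1) (Phi (bv m1)) (Phi (bv m2)) B l')
    = R dV a (\<lambda>u w. brk (ldeg dV u + 1) (ldeg dV w + 1) (Phi (T (bv u))) (Phi (T (bv w))) B l')"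
  unfolding T_com[OF bv_SymC[OF a]]
  apply (subst Int_cop_tmap[OF bv_SymC[OF a]])
    apply (erule T_bv_S)+
  apply simp
  apply (rule R_cong_valid[OF a])
  subgoal for u w
    using DS[OF T_bv_S T_bv_h T_bv_S T_bv_h B, of u w l'] by simp
  done

end


context ctx begin

lemma Eab:
  assumes a: "valid dV a" and b: "valid dV b"
  shows "(Phi (T (PT (bv a))) (bv b) l' + koz (ldeg dV a) * Phi (T (bv a)) (PT (bv b)) l')
       + (Phi (T (MV (bv a))) (bv b) l' + koz (ldeg dV a) * Phi (T (bv a)) (MV (bv b)) l')
       + MV (Phi (T (bv a)) (bv b)) l'
     = (1/2) * R dV a (\<lambda>u w. koz (ldeg dV u + 1) * (Phi (T (bv u)) (Phi (T (bv w)) (bv b)) l'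
           - koz ((ldeg dV u + 1) * (ldeg dV w + 1)) * Phi (T (bv w)) (Phi (T (bv u)) (bv b)) l'))
       + koz (ldeg dV a) * R dV b (\<lambda>u w. Phi (T (bv a)) (Phi (T (bv u)) (bv w)) l')"
proof -
  let ?x = "T (bv a)" and ?B = "bv b :: 'v list \<Rightarrow> 'k" and ?n = "ldeg dV a"
  have aS: "bv a \<in> SymC dV" using a by (rule bv_SymC)
  have BS: "?B \<in> SymC dV" using b by (rule bv_SymC)
  have s1: "Phi (T (PT (bv a))) ?B l' + Phi (T (MV (bv a))) ?B l' = Phi (ME ?x) ?B l'"
    unfolding T_O[OF aS] lin_add[OF T_lin PT_S[OF aS] MV_S[OF aS]]
    by (simp add: Phi_add[OF T_S[OF PT_S[OF aS]] T_S[OF MV_S[OF aS]] BS])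
  have s2: "Phi (ME ?x) ?B l' = - MV (Phi ?x ?B) l' + koz (?n + 1) * Phi ?x (MV ?B) l'
      + (1/2) * R dV a (\<lambda>u w. brk (ldeg dV u + 1) (ldeg dV w + 1) (Phi (T (bv u))) (Phi (T (bv w))) ?B l')"
    using Phi_eq[OF T_bv_S[OF a] T_bv_h[OF a] BS] Brk[OF a BS, of l'] by (simp add: dDiff_def)
  have s4: "Phi ?x (PT ?B) l' = R dV b (\<lambda>u w. Phi ?x (Phi (T (bv u)) (bv w)) l')"
    unfolding PT_bv[OF b] by (subst lin_R[OF Phi_lin[OF T_bv_S[OF a] T_bv_h[OF a]] b Ph_S]) auto
  have s5: "R dV a (\<lambda>u w. brk (ldeg dV u + 1) (ldeg dV w + 1) (Phi (T (bv u))) (Phi (T (bv w))) ?B l')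
     = R dV a (\<lambda>u w. koz (ldeg dV u + 1) * (Phi (T (bv u)) (Phi (T (bv w)) (bv b)) l'
           - koz ((ldeg dV u + 1) * (ldeg dV w + 1)) * Phi (T (bv w)) (Phi (T (bv u)) (bv b)) l'))"
    by (simp add: brk_def)
  have kn: "koz (?n + 1) = - (koz ?n :: 'k)" by (simp add: koz_def)
  show ?thesis
    using s1 s2 s4 s5 kn by (simp add: algebra_simps)
qed

lemma NN_sq:
  assumes f: "f \<in> SymC dV"
  shows "NN (NN f) = (\<lambda>l. 0)"
proof (rule ext)
  fix l'
  let ?L = "{l. f l \<noteq> 0}"
  have v: "\<And>l. l \<in> ?L \<Longrightarrow> valid dV l" using f by (simp add: SymC_def)
  let ?E = "\<lambda>a b. (Phi (T (PT (bv a))) (bv b) l' + koz (ldeg dV a) * Phi (T (bv a)) (PT (bv b)) l')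
       + (Phi (T (MV (bv a))) (bv b) l' + koz (ldeg dV a) * Phi (T (bv a)) (MV (bv b)) l')
       + MV (Phi (T (bv a)) (bv b)) l'"
  have "NN (NN f) l' = PT (PT f) l' + PT (MV f) l' + (MV (PT f) l' + MV (MV f) l')"
    using PT_add[OF PT_S[OF f] MV_S[OF f]] lin_add[OF MV_lin PT_S[OF f] MV_S[OF f]]
    by (simp add: fun_eq_iff)
  also have "\<dots> = (\<Sum>l\<in>?L. f l * R dV l ?E)"
    unfolding PT_W[OF PT_coder f] PT_W[OF MV_coder f] MV_PT[OF f] MV_sq[OF f]
    by (simp add: R_add sum.distrib distrib_left)
  also have "\<dots> = 0"
  proof (rule sum.neutral, rule ballI)
    fix l assume l: "l \<in> ?L"
    have "R dV l ?E = R dV l (\<lambda>a b. (1/2) * R dV a (\<lambda>u w. koz (ldeg dV u + 1) * (Phi (T (bv u)) (Phi (T (bv w)) (bv b)) l'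
           - koz ((ldeg dV u + 1) * (ldeg dV w + 1)) * Phi (T (bv w)) (Phi (T (bv u)) (bv b)) l'))
       + koz (ldeg dV a) * R dV b (\<lambda>u w. Phi (T (bv a)) (Phi (T (bv u)) (bv w)) l'))"
      by (rule R_cong_valid[OF v[OF l]]) (rule Eab)
    also have "\<dots> = 0"
      by (rule G2[where Z="\<lambda>u w c. Phi (T (bv u)) (Phi (T (bv w)) (bv c)) l'"])
    finally show "f l * R dV l ?E = 0" by simp
  qed
  finally show "NN (NN f) l' = 0" .
qed

end

theorem mainTheorem6:
  fixes dE :: "'e::{finite,linorder} \<Rightarrow> int"
    and dV :: "'v::{finite,linorder} \<Rightarrow> int"
    and ME :: "('e list \<Rightarrow> 'k::field_char_0) \<Rightarrow> ('e list \<Rightarrow> 'k)"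
    and MV :: "('v list \<Rightarrow> 'k) \<Rightarrow> ('v list \<Rightarrow> 'k)"
    and Phi :: "('e list \<Rightarrow> 'k) \<Rightarrow> ('v list \<Rightarrow> 'k) \<Rightarrow> ('v list \<Rightarrow> 'k)"
    and T :: "('v list \<Rightarrow> 'k) \<Rightarrow> ('e list \<Rightarrow> 'k)"
  assumes "lie_inf dE ME"
    and "lie_inf dV MV"
    and "action dE dV ME MV Phi"
    and "O_operator dE dV ME MV Phi T"
  shows "lie_inf dV (\<lambda>f l. PhiT dV Phi T f l + MV f l)
       \<and> lie_morph dV dE (\<lambda>f l. PhiT dV Phi T f l + MV f l) ME T"
proof -
  interpret ctx dE dV ME MV Phi T using assms by unfold_locales
  have 1: "lie_inf dV (\<lambda>f l. PhiT dV Phi T f l + MV f l)"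
    unfolding lie_inf_def using NN_coder NN_sq by blast
  have 2: "lie_morph dV dE (\<lambda>f l. PhiT dV Phi T f l + MV f l) ME T"
    unfolding lie_morph_def using assms(4) T_O by (simp add: O_operator_def)
  show ?thesis using 1 2 by blast
qed


end
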